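(* Let $(X,\mu)$ be an irreducible, non-oriented $\mathcal F$-BRW. Then $(X,\mu)$ is nonamenable if and only if $M_s<M_w$.
   Context: $S_X:=\{f:X\to\mathbb N:\sum_yf(y)<\infty\}$, $X$ finite or countable. A discrete-time BRW $(X,\mu)$: probability measures $\mu_x$ on $S_X$; each particle at $x$ is independently replaced by $f(y)$ particles at each $y$, $f\sim\mu_x$. First moments $m_{xy}:=\sum_ff(y)\mu_x(f)$ with $\sup_x\sum_ym_{xy}<\infty$, $m^{(n)}_{xy}$ the entries of $M^n$. Irreducible: every $y$ reachable from every $x$ via a path with $m_{x_ix_{i+1}}>0$. Non-oriented: $m_{xy}=m_{yx}$ for all $x,y$. $M_s(x,y):=\limsup_n(m^{(n)}_{xy})^{1/n}$, $M_w(x):=\liminf_n(\sum_ym^{(n)}_{xy})^{1/n}$; for irreducible BRWs these do not depend on $x,y$ and are denoted $M_s$, $M_w$. Nonamenable means $\inf\{|S|^{-1}\sum_{x\in S,y\notin S}m_{xy}: S\subseteq X \text{ finite nonempty}\}>0$. Locally isomorphic: surjection $g:X\to Y$ with $\nu_{g(x)}(\cdot)=\mu_x(\pi_g^{-1}(\cdot))$, $\pi_g(f)(y)=\sum_{w\in g^{-1}(y)}f(w)$; $\mathcal F$-BRW: locally isomorphic to a BRW on a finite set $Y$. *)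

theory Defs
  imports "HOL-Probability.Probability"
begin

definition fin_conf :: "('x \<Rightarrow> nat) set" where
  "fin_conf = {f. finite {y. f y \<noteq> 0}}"

definition first_moment :: "('x \<Rightarrow> ('x \<Rightarrow> nat) pmf) \<Rightarrow> 'x \<Rightarrow> 'x \<Rightarrow> ennreal" where
  "first_moment \<mu> x y = (\<integral>\<^sup>+ f. ennreal (real (f y)) \<partial>measure_pmf (\<mu> x))"

definition is_brw :: "('x \<Rightarrow> ('x \<Rightarrow> nat) pmf) \<Rightarrow> bool" where
  "is_brw \<mu> \<longleftrightarrow> (\<forall>x. set_pmf (\<mu> x) \<subseteq> fin_conf) \<and>
     (\<exists>C::real. \<forall>x. (\<integral>\<^sup>+ y. first_moment \<mu> x y \<partial>count_space UNIV) \<le> ennreal C)"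

primrec moment_pow :: "('x \<Rightarrow> ('x \<Rightarrow> nat) pmf) \<Rightarrow> nat \<Rightarrow> 'x \<Rightarrow> 'x \<Rightarrow> ennreal" where
  "moment_pow \<mu> 0 x y = (if x = y then 1 else 0)"
| "moment_pow \<mu> (Suc n) x y =
     (\<integral>\<^sup>+ z. first_moment \<mu> x z * moment_pow \<mu> n z y \<partial>count_space UNIV)"

definition M_s :: "('x \<Rightarrow> ('x \<Rightarrow> nat) pmf) \<Rightarrow> 'x \<Rightarrow> 'x \<Rightarrow> ereal" where
  "M_s \<mu> x y = limsup (\<lambda>n. ereal (root n (enn2real (moment_pow \<mu> n x y))))"

definition M_w :: "('x \<Rightarrow> ('x \<Rightarrow> nat) pmf) \<Rightarrow> 'x \<Rightarrow> ereal" where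
  "M_w \<mu> x = liminf (\<lambda>n. ereal (root n (enn2real
                 (\<integral>\<^sup>+ y. moment_pow \<mu> n x y \<partial>count_space UNIV))))"

definition irreducible_brw :: "('x \<Rightarrow> ('x \<Rightarrow> nat) pmf) \<Rightarrow> bool" where
  "irreducible_brw \<mu> \<longleftrightarrow> (\<forall>x y. (x, y) \<in> {(a, b). 0 < first_moment \<mu> a b}\<^sup>*)"

definition non_oriented :: "('x \<Rightarrow> ('x \<Rightarrow> nat) pmf) \<Rightarrow> bool" where
  "non_oriented \<mu> \<longleftrightarrow> (\<forall>x y. first_moment \<mu> x y = first_moment \<mu> y x)"

definition nonamenable :: "('x \<Rightarrow> ('x \<Rightarrow> nat) pmf) \<Rightarrow> bool" where
  "nonamenable \<mu> \<longleftrightarrow>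
     0 < (INF S\<in>{S. finite S \<and> S \<noteq> {}}.
            (\<Sum>x\<in>S. \<integral>\<^sup>+ y. indicator (- S) y * first_moment \<mu> x y \<partial>count_space UNIV)
              / of_nat (card S))"

definition proj_conf :: "('x \<Rightarrow> 'y) \<Rightarrow> ('x \<Rightarrow> nat) \<Rightarrow> 'y \<Rightarrow> nat" where
  "proj_conf g f = (\<lambda>y. \<Sum>w\<in>{w. g w = y \<and> f w \<noteq> 0}. f w)"

definition locally_isomorphic ::
  "('x \<Rightarrow> ('x \<Rightarrow> nat) pmf) \<Rightarrow> ('x \<Rightarrow> 'y) \<Rightarrow> ('y \<Rightarrow> ('y \<Rightarrow> nat) pmf) \<Rightarrow> bool" where
  "locally_isomorphic \<mu> g \<nu> \<longleftrightarrow> surj g \<and> (\<forall>x. \<nu> (g x) = map_pmf (proj_conf g) (\<mu> x))"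

end

theory Submission
  imports Defs
begin

lemma perron:
  fixes n :: "'y::finite \<Rightarrow> 'y \<Rightarrow> real"
  assumes nonneg: "\<And>i j. n i j \<ge> 0"
    and irr: "\<And>i j. (i,j) \<in> {(a,b). n a b > 0}\<^sup>*"
  shows "\<exists>\<rho> w. \<rho> \<ge> 0 \<and> (\<forall>i. w i > 0) \<and> (\<forall>i. (\<Sum>j\<in>UNIV. n i j * w j) = \<rho> * w i)"
proof -
  define S where "S = {v::real^'y. (\<forall>i. 0 \<le> v$i) \<and> sum (\<lambda>i. v$i) UNIV = 1}"
  define L where "L v = (\<chi> i. v$i + (\<Sum>j\<in>UNIV. n i j * v$j))" for v :: "real^'y"
  define d where "d v = (\<Sum>i\<in>UNIV. L v $ i)" for v
  define T where "T v = (1 / d v) *\<^sub>R L v" for v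
  have Lnn: "0 \<le> L v $ i" if "v \<in> S" for v i
    using that nonneg unfolding L_def S_def by (auto intro!: add_nonneg_nonneg sum_nonneg)
  have dge: "d v \<ge> 1" if "v \<in> S" for v
  proof -
    have "d v = (\<Sum>i\<in>UNIV. v$i) + (\<Sum>i\<in>UNIV. (\<Sum>j\<in>UNIV. n i j * v$j))"
      unfolding d_def L_def by (simp add: sum.distrib)
    moreover have "(\<Sum>i\<in>UNIV. (\<Sum>j\<in>UNIV. n i j * v$j)) \<ge> 0"
      using that nonneg unfolding S_def by (auto intro!: sum_nonneg)
    ultimately show ?thesis using that unfolding S_def by simp
  qed
  have closed: "closed S"
  proof -
    have "S = (\<Inter>i. {v. 0 \<le> v$i}) \<inter> {v. sum (\<lambda>i. v$i) UNIV = 1}"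
      unfolding S_def by auto
    moreover have "closed {v::real^'y. sum (\<lambda>i. v$i) UNIV = 1}"
      by (intro closed_Collect_eq continuous_intros)
    moreover have "closed {v::real^'y. 0 \<le> v$i}" for i
      by (intro closed_Collect_le continuous_intros)
    ultimately show ?thesis by (auto intro!: closed_Int closed_INT)
  qed
  have bounded: "bounded S"
  proof -
    have "norm v \<le> 1" if "v \<in> S" for v
    proof -
      have "norm v \<le> sum (\<lambda>i. \<bar>v$i\<bar>) UNIV" by (rule norm_le_l1_cart)
      also have "\<dots> = 1" using that unfolding S_def by simp
      finally show ?thesis .
    qed
    then show ?thesis unfolding bounded_iff by blast
  qed
  have compact: "compact S" using closed bounded by (simp add: compact_eq_bounded_closed)
  have convex: "convex S"
    unfolding convex_def S_def
    by (auto simp: sum.distrib sum_distrib_left[symmetric] intro!: add_nonneg_nonneg mult_nonneg_nonneg)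
  have ne: "S \<noteq> {}"
  proof -
    have "(\<chi> i. 1 / real CARD('y)) \<in> S" unfolding S_def by simp
    then show ?thesis by blast
  qed
  have cont: "continuous_on S T"
    unfolding T_def d_def L_def
    apply (intro continuous_intros)
    using dge unfolding d_def L_def by fastforce
  have maps: "T \<in> S \<rightarrow> S"
  proof
    fix v assume v: "v \<in> S"
    have "d v > 0" using dge[OF v] by simp
    then show "T v \<in> S"
      unfolding S_def T_def using Lnn[OF v]
      by (auto simp: d_def sum_divide_distrib[symmetric])
  qed
  obtain v where v: "v \<in> S" and fx: "T v = v" using brouwer[OF compact convex ne cont maps] by blast
  have dpos: "d v > 0" using dge[OF v] by simp
  have eq: "L v = d v *\<^sub>R v"
  proof -
    have "L v = d v *\<^sub>R ((1 / d v) *\<^sub>R L v)" using dpos by simp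
    also have "\<dots> = d v *\<^sub>R v" using fx unfolding T_def by simp
    finally show ?thesis .
  qed
  have eig: "(\<Sum>j\<in>UNIV. n i j * v$j) = (d v - 1) * v$i" for i
  proof -
    have "L v $ i = d v * v $ i" using eq by simp
    then show ?thesis unfolding L_def by (simp add: algebra_simps)
  qed
  have vnn: "0 \<le> v$i" for i using v unfolding S_def by simp
  have prp: "v$b = 0" if "(a,b) \<in> {(a,b). n a b > 0}\<^sup>*" "v$a = 0" for a b
    using that
  proof (induction rule: rtrancl_induct)
    case base then show ?case by simp
  next
    case (step b c)
    then have vb: "v$b = 0" by simp
    have "(\<Sum>j\<in>UNIV. n b j * v$j) = 0" using eig[of b] vb by simp
    then have "\<forall>j\<in>UNIV. n b j * v$j = 0"
      using sum_nonneg_eq_0_iff[of UNIV "\<lambda>j. n b j * v$j"] nonneg vnn by simp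
    then have "n b c * v$c = 0" by blast
    moreover have "n b c > 0" using step(2) by simp
    ultimately show ?case by simp
  qed
  have pos: "v$i > 0" for i
  proof (rule ccontr)
    assume "\<not> v$i > 0"
    then have "v$i = 0" using vnn[of i] by simp
    then have "\<forall>j. v$j = 0" using prp irr by blast
    then show False using v unfolding S_def by simp
  qed
  show ?thesis
    apply (rule exI[of _ "d v - 1"], rule exI[of _ "\<lambda>i. v$i"])
    using dge[OF v] pos eig by simp
qed


lemma layer:
  fixes b :: "'a \<Rightarrow> 'a \<Rightarrow> real" and p :: "'a \<Rightarrow> real"
  assumes F: "finite F"
    and IS: "\<And>S. finite S \<Longrightarrow> S \<subseteq> F \<Longrightarrow> (\<Sum>x\<in>S. \<rho> * p x - (\<Sum>y\<in>S. b x y)) \<ge> \<kappa> * (\<Sum>x\<in>S. p x)"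
    and hnn: "\<And>x. x \<in> F \<Longrightarrow> h x \<ge> 0"
  shows "(\<Sum>x\<in>F. (\<Sum>y\<in>F. b x y * max (h x - h y) 0) + (\<rho> * p x - (\<Sum>y\<in>F. b x y)) * h x)
           \<ge> \<kappa> * (\<Sum>x\<in>F. p x * h x)"
  using hnn
proof (induction "card {x\<in>F. h x > 0}" arbitrary: h rule: less_induct)
  case less
  define S where "S = {x\<in>F. h x > 0}"
  have SF: "S \<subseteq> F" and Sfin: "finite S" using F unfolding S_def by auto
  show ?case
  proof (cases "S = {}")
    case True
    then have "\<forall>x\<in>F. h x = 0" using less.prems unfolding S_def by force
    then show ?thesis by simp
  next
    case False
    define t where "t = Min (h ` S)"
    have "t \<in> h ` S" using Min_in[of "h ` S"] Sfin False unfolding t_def by auto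
    then obtain x0 where x0: "x0 \<in> S" "h x0 = t" by auto
    have tle: "t \<le> h x" if "x \<in> S" for x using Sfin that unfolding t_def by simp
    have tpos: "t > 0" using x0 unfolding S_def by simp
    define g where "g x = h x - (if x \<in> S then t else 0)" for x
    have gnn: "g x \<ge> 0" if "x \<in> F" for x
      using tle less.prems[OF that] unfolding g_def by auto
    have sub: "{x\<in>F. g x > 0} \<subseteq> S - {x0}"
      using x0 unfolding g_def S_def by auto
    have "card {x\<in>F. g x > 0} < card {x\<in>F. h x > 0}"
    proof -
      have "card {x\<in>F. g x > 0} \<le> card (S - {x0})" using sub Sfin by (intro card_mono) auto
      also have "\<dots> < card S" using x0 Sfin by (meson card_Diff1_less)
      finally show ?thesis unfolding S_def .
    qed
    from less.hyps[OF this gnn]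
    have IH: "(\<Sum>x\<in>F. (\<Sum>y\<in>F. b x y * max (g x - g y) 0) + (\<rho> * p x - (\<Sum>y\<in>F. b x y)) * g x)
           \<ge> \<kappa> * (\<Sum>x\<in>F. p x * g x)" by blast
    have pw: "max (h x - h y) 0 = max (g x - g y) 0 + (if x \<in> S \<and> y \<notin> S then t else 0)"
      if "x \<in> F" "y \<in> F" for x y
    proof -
      have hx: "h x \<ge> 0" "h y \<ge> 0" using less.prems that by auto
      have zx: "h x = 0" if "x \<notin> S" using that hx \<open>x \<in> F\<close> unfolding S_def by auto
      have zy: "h y = 0" if "y \<notin> S" using that hx \<open>y \<in> F\<close> unfolding S_def by auto
      show ?thesis
      proof (cases "x \<in> S"; cases "y \<in> S")
        assume "x \<in> S" "y \<in> S" then show ?thesis unfolding g_def by simp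
      next
        assume "x \<in> S" "y \<notin> S" then show ?thesis using zy tle[of x] tpos unfolding g_def by (simp add: max_def)
      next
        assume "x \<notin> S" "y \<in> S" then show ?thesis using zx tle[of y] hx unfolding g_def by (simp add: max_def)
      next
        assume "x \<notin> S" "y \<notin> S" then show ?thesis using zx zy unfolding g_def by (simp add: max_def)
      qed
    qed
    have split: "(\<Sum>y\<in>F. b x y) = (\<Sum>y\<in>S. b x y) + (\<Sum>y\<in>F - S. b x y)" for x
      using F SF by (metis add.commute sum.subset_diff)
    have e1: "(\<Sum>y\<in>F. b x y * max (h x - h y) 0) = (\<Sum>y\<in>F. b x y * max (g x - g y) 0)
        + (if x \<in> S then t * (\<Sum>y\<in>F - S. b x y) else 0)" if "x \<in> F" for x
    proof -
      have "(\<Sum>y\<in>F. b x y * max (h x - h y) 0) = (\<Sum>y\<in>F. b x y * max (g x - g y) 0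
          + (if x \<in> S then t * (if y \<in> F - S then b x y else 0) else 0))"
        using pw[OF that] by (intro sum.cong) (auto simp: algebra_simps)
      also have "\<dots> = (\<Sum>y\<in>F. b x y * max (g x - g y) 0)
          + (if x \<in> S then t * (\<Sum>y\<in>F. if y \<in> F - S then b x y else 0) else 0)"
        by (simp add: sum.distrib sum_distrib_left)
      also have "(\<Sum>y\<in>F. if y \<in> F - S then b x y else 0) = (\<Sum>y\<in>F - S. b x y)"
        using F by (simp add: sum.If_cases Int_absorb1 Diff_eq Compl_eq)
      finally show ?thesis .
    qed
    have e2: "(\<rho> * p x - (\<Sum>y\<in>F. b x y)) * h x = (\<rho> * p x - (\<Sum>y\<in>F. b x y)) * g x
        + (if x \<in> S then t * (\<rho> * p x - (\<Sum>y\<in>F. b x y)) else 0)" for x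
      unfolding g_def by (auto simp: algebra_simps)
    have "(\<Sum>x\<in>F. (\<Sum>y\<in>F. b x y * max (h x - h y) 0) + (\<rho> * p x - (\<Sum>y\<in>F. b x y)) * h x)
        = (\<Sum>x\<in>F. ((\<Sum>y\<in>F. b x y * max (g x - g y) 0) + (\<rho> * p x - (\<Sum>y\<in>F. b x y)) * g x)
             + (if x \<in> S then t * (\<rho> * p x - (\<Sum>y\<in>S. b x y)) else 0))"
    proof (intro sum.cong refl)
      fix x assume xF: "x \<in> F"
      show "(\<Sum>y\<in>F. b x y * max (h x - h y) 0) + (\<rho> * p x - (\<Sum>y\<in>F. b x y)) * h x
        = ((\<Sum>y\<in>F. b x y * max (g x - g y) 0) + (\<rho> * p x - (\<Sum>y\<in>F. b x y)) * g x)
             + (if x \<in> S then t * (\<rho> * p x - (\<Sum>y\<in>S. b x y)) else 0)"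
        unfolding e1[OF xF] e2[of x] unfolding split[of x]
        by (cases "x \<in> S") (simp_all add: algebra_simps)
    qed
    also have "\<dots> = (\<Sum>x\<in>F. (\<Sum>y\<in>F. b x y * max (g x - g y) 0) + (\<rho> * p x - (\<Sum>y\<in>F. b x y)) * g x)
        + t * (\<Sum>x\<in>S. \<rho> * p x - (\<Sum>y\<in>S. b x y))"
      using F SF by (simp add: sum.distrib sum_distrib_left sum.If_cases Int_absorb1)
    finally have LHS: "(\<Sum>x\<in>F. (\<Sum>y\<in>F. b x y * max (h x - h y) 0) + (\<rho> * p x - (\<Sum>y\<in>F. b x y)) * h x)
        = (\<Sum>x\<in>F. (\<Sum>y\<in>F. b x y * max (g x - g y) 0) + (\<rho> * p x - (\<Sum>y\<in>F. b x y)) * g x)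
        + t * (\<Sum>x\<in>S. \<rho> * p x - (\<Sum>y\<in>S. b x y))" .
    have RHS: "(\<Sum>x\<in>F. p x * h x) = (\<Sum>x\<in>F. p x * g x) + t * (\<Sum>x\<in>S. p x)"
    proof -
      have "(\<Sum>x\<in>F. p x * h x) = (\<Sum>x\<in>F. p x * g x + (if x \<in> S then t * p x else 0))"
        unfolding g_def by (intro sum.cong) (auto simp: algebra_simps)
      also have "\<dots> = (\<Sum>x\<in>F. p x * g x) + t * (\<Sum>x\<in>S. p x)"
        using F SF by (simp add: sum.distrib sum_distrib_left sum.If_cases Int_absorb1)
      finally show ?thesis .
    qed
    have "t * (\<kappa> * (\<Sum>x\<in>S. p x)) \<le> t * (\<Sum>x\<in>S. \<rho> * p x - (\<Sum>y\<in>S. b x y))"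
      using IS[OF Sfin SF] tpos by (intro mult_left_mono) auto
    then show ?thesis using IH unfolding LHS RHS by (simp add: algebra_simps)
  qed
qed


lemma amgm_aux:
  fixes a c s :: real
  assumes "s > 0" "c \<ge> 0"
  shows "\<bar>a\<bar> * c \<le> (s * a\<^sup>2 + c\<^sup>2 / s) / 2"
proof -
  have "0 \<le> (s * \<bar>a\<bar> - c)\<^sup>2 / s" using assms by simp
  also have "(s * \<bar>a\<bar> - c)\<^sup>2 / s = s * a\<^sup>2 - 2 * \<bar>a\<bar> * c + c\<^sup>2 / s"
    using assms by (simp add: power2_eq_square field_simps)
  finally show ?thesis by simp
qed

lemma cheeger:
  fixes b :: "'a \<Rightarrow> 'a \<Rightarrow> real" and p f :: "'a \<Rightarrow> real"
  assumes F: "finite F" and rho: "\<rho> > 0" and kap: "\<kappa> > 0"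
    and bsym: "\<And>x y. b x y = b y x" and bnn: "\<And>x y. b x y \<ge> 0"
    and subinv: "\<And>x. (\<Sum>y\<in>F. b x y) \<le> \<rho> * p x"
    and IS: "\<And>S. finite S \<Longrightarrow> S \<subseteq> F \<Longrightarrow> (\<Sum>x\<in>S. \<rho> * p x - (\<Sum>y\<in>S. b x y)) \<ge> \<kappa> * (\<Sum>x\<in>S. p x)"
    and fnn: "\<And>x. x \<in> F \<Longrightarrow> f x \<ge> 0"
  shows "(\<Sum>x\<in>F. \<Sum>y\<in>F. b x y * f x * f y) \<le> (\<rho> - \<kappa>\<^sup>2 / (8 * \<rho>)) * (\<Sum>x\<in>F. p x * (f x)\<^sup>2)"
proof -
  define h where "h x = (f x)\<^sup>2" for x
  define \<beta> where "\<beta> x = \<rho> * p x - (\<Sum>y\<in>F. b x y)" for x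
  define s where "s = 4 * \<rho> / \<kappa>"
  have spos: "s > 0" using rho kap unfolding s_def by simp
  have bnn': "\<beta> x \<ge> 0" for x using subinv[of x] unfolding \<beta>_def by simp
  define Q where "Q = (\<Sum>x\<in>F. \<Sum>y\<in>F. b x y * f x * f y)"
  define B2 where "B2 = (\<Sum>x\<in>F. \<Sum>y\<in>F. b x y * (f x)\<^sup>2)"
  define N where "N = (\<Sum>x\<in>F. p x * (f x)\<^sup>2)"
  have L: "\<kappa> * N \<le> (\<Sum>x\<in>F. (\<Sum>y\<in>F. b x y * max (h x - h y) 0) + \<beta> x * h x)"
    using layer[OF F IS, of h] unfolding N_def h_def \<beta>_def by (simp add: fnn)
  have i1: "max (h x - h y) 0 \<le> (s * (f x - f y)\<^sup>2 + (f x + f y)\<^sup>2 / s) / 2"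
    if "x \<in> F" "y \<in> F" for x y
  proof -
    have "max (h x - h y) 0 \<le> \<bar>f x - f y\<bar> * (f x + f y)"
    proof -
      have e: "h x - h y = (f x - f y) * (f x + f y)" unfolding h_def by (simp add: power2_eq_square algebra_simps)
      have nn: "f x + f y \<ge> 0" using fnn[OF that(1)] fnn[OF that(2)] by simp
      have "(f x - f y) * (f x + f y) \<le> \<bar>f x - f y\<bar> * (f x + f y)"
        using nn by (intro mult_right_mono) auto
      moreover have "0 \<le> \<bar>f x - f y\<bar> * (f x + f y)" using nn by simp
      ultimately show ?thesis unfolding e by simp
    qed
    also have "\<dots> \<le> (s * (f x - f y)\<^sup>2 + (f x + f y)\<^sup>2 / s) / 2"
      using amgm_aux[OF spos, of "f x + f y" "f x - f y"] fnn that by simp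
    finally show ?thesis .
  qed
  have i2: "h x \<le> (s * (f x)\<^sup>2 + (f x)\<^sup>2 / s) / 2" if "x \<in> F" for x
    using amgm_aux[OF spos, of "f x" "f x"] fnn[OF that] unfolding h_def by (simp add: power2_eq_square)
  define E1 where "E1 = (\<Sum>x\<in>F. \<Sum>y\<in>F. b x y * (f x - f y)\<^sup>2) + (\<Sum>x\<in>F. \<beta> x * (f x)\<^sup>2)"
  define E2 where "E2 = (\<Sum>x\<in>F. \<Sum>y\<in>F. b x y * (f x + f y)\<^sup>2) + (\<Sum>x\<in>F. \<beta> x * (f x)\<^sup>2)"
  have "(\<Sum>x\<in>F. (\<Sum>y\<in>F. b x y * max (h x - h y) 0) + \<beta> x * h x)
      \<le> (\<Sum>x\<in>F. (\<Sum>y\<in>F. b x y * ((s * (f x - f y)\<^sup>2 + (f x + f y)\<^sup>2 / s) / 2))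
              + \<beta> x * ((s * (f x)\<^sup>2 + (f x)\<^sup>2 / s) / 2))"
    using i1 i2 bnn bnn' by (intro sum_mono add_mono mult_left_mono) auto
  also have "\<dots> = (\<Sum>x\<in>F. (s / 2) * ((\<Sum>y\<in>F. b x y * (f x - f y)\<^sup>2) + \<beta> x * (f x)\<^sup>2)
        + (1 / (2 * s)) * ((\<Sum>y\<in>F. b x y * (f x + f y)\<^sup>2) + \<beta> x * (f x)\<^sup>2))"
  proof (intro sum.cong refl)
    fix x
    have "(\<Sum>y\<in>F. b x y * ((s * (f x - f y)\<^sup>2 + (f x + f y)\<^sup>2 / s) / 2))
       = (\<Sum>y\<in>F. (s / 2) * (b x y * (f x - f y)\<^sup>2) + (1 / (2 * s)) * (b x y * (f x + f y)\<^sup>2))"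
      by (intro sum.cong refl) (simp add: field_simps)
    also have "\<dots> = (s / 2) * (\<Sum>y\<in>F. b x y * (f x - f y)\<^sup>2) + (1 / (2 * s)) * (\<Sum>y\<in>F. b x y * (f x + f y)\<^sup>2)"
      by (simp add: sum.distrib sum_distrib_left)
    finally show "(\<Sum>y\<in>F. b x y * ((s * (f x - f y)\<^sup>2 + (f x + f y)\<^sup>2 / s) / 2))
              + \<beta> x * ((s * (f x)\<^sup>2 + (f x)\<^sup>2 / s) / 2)
      = (s / 2) * ((\<Sum>y\<in>F. b x y * (f x - f y)\<^sup>2) + \<beta> x * (f x)\<^sup>2)
        + (1 / (2 * s)) * ((\<Sum>y\<in>F. b x y * (f x + f y)\<^sup>2) + \<beta> x * (f x)\<^sup>2)"
      using spos by (simp add: field_simps)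
  qed
  also have "\<dots> = (s / 2) * E1 + (1 / (2 * s)) * E2"
    unfolding E1_def E2_def
    by (simp add: sum.distrib sum_distrib_left distrib_left)
  finally have L2: "\<kappa> * N \<le> (s / 2) * E1 + (1 / (2 * s)) * E2" using L by linarith
  have swap: "(\<Sum>x\<in>F. \<Sum>y\<in>F. b x y * (f y)\<^sup>2) = B2"
    unfolding B2_def by (subst sum.swap) (simp add: bsym)
  have eE1: "E1 = 2 * B2 - 2 * Q + (\<Sum>x\<in>F. \<beta> x * (f x)\<^sup>2)"
  proof -
    have "(\<Sum>x\<in>F. \<Sum>y\<in>F. b x y * (f x - f y)\<^sup>2)
        = (\<Sum>x\<in>F. \<Sum>y\<in>F. b x y * (f x)\<^sup>2) + (\<Sum>x\<in>F. \<Sum>y\<in>F. b x y * (f y)\<^sup>2) - 2 * Q"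
      unfolding Q_def
      by (simp add: power2_diff algebra_simps sum.distrib sum_subtractf sum_distrib_left)
    then show ?thesis unfolding E1_def swap B2_def by simp
  qed
  have eE2: "E2 = 2 * B2 + 2 * Q + (\<Sum>x\<in>F. \<beta> x * (f x)\<^sup>2)"
  proof -
    have "(\<Sum>x\<in>F. \<Sum>y\<in>F. b x y * (f x + f y)\<^sup>2)
        = (\<Sum>x\<in>F. \<Sum>y\<in>F. b x y * (f x)\<^sup>2) + (\<Sum>x\<in>F. \<Sum>y\<in>F. b x y * (f y)\<^sup>2) + 2 * Q"
      unfolding Q_def
      by (simp add: power2_sum algebra_simps sum.distrib sum_distrib_left)
    then show ?thesis unfolding E2_def swap B2_def by simp
  qed
  have eb: "(\<Sum>x\<in>F. \<beta> x * (f x)\<^sup>2) = \<rho> * N - B2"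
    unfolding \<beta>_def N_def B2_def
    by (simp add: algebra_simps sum_subtractf sum_distrib_left sum_distrib_right)
  have bnnsum: "(\<Sum>x\<in>F. \<beta> x * (f x)\<^sup>2) \<ge> 0" using bnn' by (intro sum_nonneg) auto
  have QB: "Q \<le> B2"
  proof -
    have "Q \<le> (\<Sum>x\<in>F. \<Sum>y\<in>F. b x y * (((f x)\<^sup>2 + (f y)\<^sup>2) / 2))"
      unfolding Q_def
    proof (intro sum_mono)
      fix x y
      have "f x * f y \<le> ((f x)\<^sup>2 + (f y)\<^sup>2) / 2"
      proof -
        have "0 \<le> (f x - f y)\<^sup>2" by simp
        then show ?thesis by (simp add: power2_diff power2_eq_square algebra_simps)
      qed
      then show "b x y * f x * f y \<le> b x y * (((f x)\<^sup>2 + (f y)\<^sup>2) / 2)"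
        using bnn[of x y] mult_left_mono by (simp add: mult.assoc)
    qed
    also have "\<dots> = (\<Sum>x\<in>F. \<Sum>y\<in>F. (1/2) * (b x y * (f x)\<^sup>2) + (1/2) * (b x y * (f y)\<^sup>2))"
      by (intro sum.cong refl) (simp add: algebra_simps)
    also have "\<dots> = (B2 + (\<Sum>x\<in>F. \<Sum>y\<in>F. b x y * (f y)\<^sup>2)) / 2"
      unfolding B2_def by (simp add: sum.distrib sum_distrib_left[symmetric] sum_divide_distrib[symmetric])
    finally show ?thesis unfolding swap by simp
  qed
  have Qnn: "Q \<ge> 0" unfolding Q_def using bnn fnn by (intro sum_nonneg) auto
  have "\<kappa> * N \<le> (s / 2) * (2 * \<rho> * N - 2 * Q) + (1 / (2 * s)) * (4 * \<rho> * N)"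
  proof -
    have "E1 \<le> 2 * \<rho> * N - 2 * Q" using eE1 eb bnnsum by linarith
    moreover have "E2 \<le> 4 * \<rho> * N" using eE2 eb bnnsum QB by linarith
    ultimately have "(s / 2) * E1 + (1 / (2 * s)) * E2
        \<le> (s / 2) * (2 * \<rho> * N - 2 * Q) + (1 / (2 * s)) * (4 * \<rho> * N)"
      using spos by (intro add_mono mult_left_mono) auto
    then show ?thesis using L2 by linarith
  qed
  also have "\<dots> = (4 * \<rho> / \<kappa>) * (\<rho> * N - Q) + \<kappa> * N / 2"
    unfolding s_def using rho kap by (simp add: field_simps)
  finally have "\<kappa> * N / 2 \<le> (4 * \<rho> / \<kappa>) * (\<rho> * N - Q)" by simp
  then have "(\<kappa> / (4 * \<rho>)) * (\<kappa> * N / 2) \<le> (\<kappa> / (4 * \<rho>)) * ((4 * \<rho> / \<kappa>) * (\<rho> * N - Q))"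
    using rho kap by (intro mult_left_mono) auto
  also have "\<dots> = \<rho> * N - Q" using rho kap by (simp add: field_simps)
  finally have "\<kappa>\<^sup>2 * N / (8 * \<rho>) \<le> \<rho> * N - Q" by (simp add: power2_eq_square mult.assoc)
  then show ?thesis unfolding Q_def[symmetric] N_def[symmetric] by (simp add: algebra_simps)
qed


lemma norm_bound:
  fixes a :: "'a \<Rightarrow> 'a \<Rightarrow> real" and u :: "'a \<Rightarrow> real"
  assumes F: "finite F" and asym: "\<And>x y. a x y = a y x" and ann: "\<And>x y. a x y \<ge> 0"
    and th: "\<theta> \<ge> 0"
    and Q: "\<And>v. (\<And>x. x \<in> F \<Longrightarrow> v x \<ge> 0) \<Longrightarrow>
              (\<Sum>x\<in>F. \<Sum>y\<in>F. a x y * v x * v y) \<le> \<theta> * (\<Sum>x\<in>F. (v x)\<^sup>2)"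
  shows "(\<Sum>x\<in>F. (\<Sum>y\<in>F. a x y * u y)\<^sup>2) \<le> \<theta>\<^sup>2 * (\<Sum>x\<in>F. (u x)\<^sup>2)"
proof -
  define q where "q v = (\<Sum>x\<in>F. \<Sum>y\<in>F. a x y * v x * v y)" for v :: "'a \<Rightarrow> real"
  define n2 where "n2 v = (\<Sum>x\<in>F. (v x)\<^sup>2)" for v :: "'a \<Rightarrow> real"
  have absq: "\<bar>q v\<bar> \<le> \<theta> * n2 v" for v
  proof -
    have "\<bar>q v\<bar> \<le> (\<Sum>x\<in>F. \<bar>\<Sum>y\<in>F. a x y * v x * v y\<bar>)" unfolding q_def by (rule sum_abs)
    also have "\<dots> \<le> (\<Sum>x\<in>F. \<Sum>y\<in>F. \<bar>a x y * v x * v y\<bar>)" by (intro sum_mono sum_abs)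
    also have "\<dots> = q (\<lambda>x. \<bar>v x\<bar>)" unfolding q_def using ann by (simp add: abs_mult)
    also have "\<dots> \<le> \<theta> * n2 (\<lambda>x. \<bar>v x\<bar>)" unfolding q_def n2_def by (rule Q) simp
    also have "\<dots> = \<theta> * n2 v" unfolding n2_def by simp
    finally show ?thesis .
  qed
  define h where "h x = (\<Sum>y\<in>F. a x y * u y)" for x
  define H where "H = n2 h"
  define U where "U = n2 u"
  have Hnn: "H \<ge> 0" unfolding H_def n2_def by (intro sum_nonneg) auto
  have c1: "(\<Sum>x\<in>F. \<Sum>y\<in>F. a x y * h x * u y) = H"
  proof -
    have "(\<Sum>x\<in>F. \<Sum>y\<in>F. a x y * h x * u y) = (\<Sum>x\<in>F. h x * (\<Sum>y\<in>F. a x y * u y))"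
      by (simp add: sum_distrib_left mult_ac)
    also have "\<dots> = H" unfolding H_def n2_def by (simp add: h_def[symmetric] power2_eq_square)
    finally show ?thesis .
  qed
  have c2: "(\<Sum>x\<in>F. \<Sum>y\<in>F. a x y * u x * h y) = H"
  proof -
    have "(\<Sum>x\<in>F. \<Sum>y\<in>F. a x y * u x * h y) = (\<Sum>y\<in>F. \<Sum>x\<in>F. a y x * h y * u x)"
      by (subst sum.swap) (simp add: asym mult.commute mult.left_commute)
    then show ?thesis using c1 by simp
  qed
  have key: "4 * t * H \<le> \<theta> * (2 * t\<^sup>2 * H + 2 * U)" for t
  proof -
    define P where "P x = t * h x + u x" for x
    define M where "M x = t * h x - u x" for x
    have "q P - q M = (\<Sum>x\<in>F. \<Sum>y\<in>F. 2 * t * (a x y * h x * u y) + 2 * t * (a x y * u x * h y))"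
      unfolding q_def P_def M_def
      by (simp add: sum_subtractf[symmetric] algebra_simps)
    also have "\<dots> = 4 * t * H"
      using c1 c2 by (simp add: sum.distrib sum_distrib_left[symmetric])
    finally have e1: "q P - q M = 4 * t * H" .
    have "n2 P + n2 M = (\<Sum>x\<in>F. 2 * t\<^sup>2 * (h x)\<^sup>2 + 2 * (u x)\<^sup>2)"
      unfolding n2_def P_def M_def
      by (simp add: sum.distrib[symmetric] power2_eq_square algebra_simps)
    also have "\<dots> = 2 * t\<^sup>2 * H + 2 * U"
      unfolding H_def U_def n2_def by (simp add: sum.distrib sum_distrib_left)
    finally have e2: "n2 P + n2 M = 2 * t\<^sup>2 * H + 2 * U" .
    have "q P \<le> \<theta> * n2 P" using absq[of P] by simp
    moreover have "- q M \<le> \<theta> * n2 M" using absq[of M] by simp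
    ultimately have "q P - q M \<le> \<theta> * (n2 P + n2 M)" by (simp add: algebra_simps)
    then show ?thesis using e1 e2 by simp
  qed
  have "H \<le> \<theta>\<^sup>2 * U"
  proof (cases "\<theta> = 0")
    case True
    then have "4 * H \<le> 0" using key[of 1] by simp
    then show ?thesis using Hnn True by simp
  next
    case False
    then have tp: "\<theta> > 0" using th by simp
    have "4 * (1/\<theta>) * H \<le> \<theta> * (2 * (1/\<theta>)\<^sup>2 * H + 2 * U)" by (rule key)
    also have "\<dots> = 2 * H / \<theta> + 2 * \<theta> * U" using tp by (simp add: field_simps power2_eq_square)
    finally have "2 * H / \<theta> \<le> 2 * \<theta> * U" by simp
    then have "H \<le> \<theta> * \<theta> * U" using tp by (simp add: field_simps)
    then show ?thesis by (simp add: power2_eq_square)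
  qed
  then show ?thesis unfolding H_def U_def n2_def h_def .
qed

lemma power_lower:
  fixes a :: "'a \<Rightarrow> 'a \<Rightarrow> real" and u :: "'a \<Rightarrow> real"
  assumes F: "finite F" and asym: "\<And>x y. a x y = a y x" and r: "r \<ge> 0"
    and Q: "(\<Sum>x\<in>F. \<Sum>y\<in>F. a x y * u x * u y) \<ge> r * (\<Sum>x\<in>F. (u x)\<^sup>2)"
  shows "(\<Sum>x\<in>F. ((((\<lambda>v x. \<Sum>y\<in>F. a x y * v y) ^^ k) u) x)\<^sup>2) \<ge> r^(2*k) * (\<Sum>x\<in>F. (u x)\<^sup>2)"
proof -
  define A where "A = (\<lambda>(v::'a\<Rightarrow>real) x. \<Sum>y\<in>F. a x y * v y)"
  define vec where "vec k = (A ^^ k) u" for k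
  define N where "N k = (\<Sum>x\<in>F. (vec k x)\<^sup>2)" for k
  have vS: "vec (Suc k) x = (\<Sum>y\<in>F. a x y * vec k y)" for k x
    unfolding vec_def A_def by simp
  have Nnn: "N k \<ge> 0" for k unfolding N_def by (intro sum_nonneg) auto
  have inner: "(\<Sum>x\<in>F. vec (Suc (Suc k)) x * vec k x) = N (Suc k)" for k
  proof -
    have "(\<Sum>x\<in>F. vec (Suc (Suc k)) x * vec k x) = (\<Sum>x\<in>F. \<Sum>y\<in>F. a x y * vec (Suc k) y * vec k x)"
      unfolding vS[of "Suc k"] by (simp add: sum_distrib_right)
    also have "\<dots> = (\<Sum>y\<in>F. \<Sum>x\<in>F. a y x * vec k x * vec (Suc k) y)"
      by (subst sum.swap) (simp add: asym mult.commute mult.left_commute)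
    also have "\<dots> = (\<Sum>y\<in>F. vec (Suc k) y * vec (Suc k) y)"
      unfolding vS by (simp add: sum_distrib_right mult.commute)
    finally show ?thesis unfolding N_def by (simp add: power2_eq_square)
  qed
  have cs: "(N (Suc k))\<^sup>2 \<le> N (Suc (Suc k)) * N k" for k
    using Cauchy_Schwarz_ineq_sum[of "vec (Suc (Suc k))" "vec k" F] unfolding inner N_def .
  have zero: "N (Suc k) = 0" if "N k = 0" for k
  proof -
    have "\<forall>x\<in>F. (vec k x)\<^sup>2 = 0" using that F unfolding N_def
      by (subst sum_nonneg_eq_0_iff[symmetric]) auto
    then have "\<forall>x\<in>F. vec k x = 0" by simp
    then have "vec (Suc k) x = 0" for x unfolding vS by simp
    then show ?thesis unfolding N_def by simp
  qed
  have step: "N (Suc k) \<ge> r\<^sup>2 * N k" for k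
  proof (induction k)
    case 0
    have q: "(\<Sum>x\<in>F. vec (Suc 0) x * vec 0 x) = (\<Sum>x\<in>F. \<Sum>y\<in>F. a x y * u x * u y)"
      unfolding vS by (simp add: vec_def sum_distrib_right sum_distrib_left mult.commute mult.left_commute)
    have "(r * N 0)\<^sup>2 \<le> (\<Sum>x\<in>F. vec (Suc 0) x * vec 0 x)\<^sup>2"
      using Q r Nnn[of 0] unfolding q by (intro power_mono) (auto simp: N_def vec_def)
    also have "\<dots> \<le> N (Suc 0) * N 0"
      using Cauchy_Schwarz_ineq_sum[of "vec (Suc 0)" "vec 0" F] unfolding N_def .
    finally have h: "r\<^sup>2 * N 0 * N 0 \<le> N (Suc 0) * N 0" by (simp add: power2_eq_square algebra_simps)
    show ?case
    proof (cases "N 0 = 0")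
      case True then show ?thesis using Nnn by simp
    next
      case False then have "N 0 > 0" using Nnn[of 0] by simp
      then show ?thesis using h by simp
    qed
  next
    case (Suc k)
    show ?case
    proof (cases "N (Suc k) = 0")
      case True then show ?thesis using Nnn by simp
    next
      case False
      then have Np: "N (Suc k) > 0" using Nnn[of "Suc k"] by simp
      have Nk: "N k > 0" using zero[of k] False Nnn[of k] by force
      have "r\<^sup>2 * N k * N (Suc k) \<le> N (Suc k) * N (Suc k)"
        using Suc.IH Np by (simp add: mult_right_mono)
      also have "\<dots> \<le> N (Suc (Suc k)) * N k" using cs[of k] by (simp add: power2_eq_square)
      finally have "(r\<^sup>2 * N (Suc k)) * N k \<le> N (Suc (Suc k)) * N k" by (simp add: algebra_simps)
      then show ?thesis using Nk by simp
    qed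
  qed
  have "N k \<ge> r^(2*k) * N 0" for k
  proof (induction k)
    case 0 then show ?case by simp
  next
    case (Suc k)
    have "r^(2 * Suc k) * N 0 = r\<^sup>2 * (r^(2*k) * N 0)" by (simp add: power_add power2_eq_square algebra_simps)
    also have "\<dots> \<le> r\<^sup>2 * N k" using Suc.IH by (intro mult_left_mono) auto
    also have "\<dots> \<le> N (Suc k)" by (rule step)
    finally show ?case .
  qed
  then show ?thesis unfolding N_def vec_def A_def by simp
qed


lemma le_nn_integral_count: "f z \<le> (\<integral>\<^sup>+x. f x \<partial>count_space UNIV)"
proof -
  have "(\<integral>\<^sup>+x. f x * indicator {z} x \<partial>count_space UNIV) = (\<Sum>x\<in>{z}. f x * indicator {z} x)"
    by (rule nn_integral_count_space') auto
  then have "f z = (\<integral>\<^sup>+x. f x * indicator {z} x \<partial>count_space UNIV)" by simp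
  also have "\<dots> \<le> (\<integral>\<^sup>+x. f x \<partial>count_space UNIV)"
    by (intro nn_integral_mono) (auto simp: indicator_def)
  finally show ?thesis .
qed

locale fbrw =
  fixes \<mu> :: "'x::countable \<Rightarrow> ('x \<Rightarrow> nat) pmf"
    and g :: "'x \<Rightarrow> 'y::finite"
    and \<nu> :: "'y \<Rightarrow> ('y \<Rightarrow> nat) pmf"
  assumes brw: "is_brw \<mu>" and brwn: "is_brw \<nu>"
    and li: "locally_isomorphic \<mu> g \<nu>"
    and irr: "irreducible_brw \<mu>" and sym: "non_oriented \<mu>"
begin

abbreviation "fm \<equiv> first_moment \<mu>"
definition "m x y = enn2real (fm x y)"

lemma row_bound: obtains C :: real where "C \<ge> 0" "\<And>x. (\<integral>\<^sup>+ y. fm x y \<partial>count_space UNIV) \<le> ennreal C"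
proof -
  obtain C :: real where C: "\<And>x. (\<integral>\<^sup>+ y. fm x y \<partial>count_space UNIV) \<le> ennreal C"
    using brw unfolding is_brw_def by blast
  show ?thesis
    apply (rule that[of "max C 0"]) apply simp
    using C by (metis ennreal_max_0 max.commute)
qed

lemma fm_fin: "fm x y < top"
proof -
  obtain C :: real where "\<And>x. (\<integral>\<^sup>+ y. fm x y \<partial>count_space UNIV) \<le> ennreal C" using row_bound by blast
  then have "fm x y \<le> ennreal C" using le_nn_integral_count[of "fm x" y] order_trans by blast
  then show ?thesis using ennreal_less_top[of C] by (rule le_less_trans)
qed

lemma fm_m: "fm x y = ennreal (m x y)"
  unfolding m_def using fm_fin by simp

lemma m_nn: "m x y \<ge> 0" unfolding m_def by simp

lemma m_sym: "m x y = m y x" using sym unfolding non_oriented_def m_def by simp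

lemma bridge: "first_moment \<nu> (g x) j = (\<integral>\<^sup>+y. indicator {y. g y = j} y * fm x y \<partial>count_space UNIV)"
proof -
  have nu: "\<nu> (g x) = map_pmf (proj_conf g) (\<mu> x)" using li unfolding locally_isomorphic_def by blast
  have "first_moment \<nu> (g x) j = (\<integral>\<^sup>+f. ennreal (real (proj_conf g f j)) \<partial>measure_pmf (\<mu> x))"
    unfolding first_moment_def nu by simp
  also have "\<dots> = (\<integral>\<^sup>+f. (\<integral>\<^sup>+w. indicator {w. g w = j} w * ennreal (real (f w)) \<partial>count_space UNIV) \<partial>measure_pmf (\<mu> x))"
  proof (rule nn_integral_cong_AE)
    show "AE f in measure_pmf (\<mu> x). ennreal (real (proj_conf g f j)) =
          (\<integral>\<^sup>+w. indicator {w. g w = j} w * ennreal (real (f w)) \<partial>count_space UNIV)"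
    proof (subst AE_measure_pmf_iff, intro ballI)
      fix f assume "f \<in> set_pmf (\<mu> x)"
      then have fin: "finite {w. f w \<noteq> 0}" using brw unfolding is_brw_def fin_conf_def by blast
      define A where "A = {w. g w = j \<and> f w \<noteq> 0}"
      have Afin: "finite A" using fin unfolding A_def by (rule rev_finite_subset) auto
      have "(\<integral>\<^sup>+w. indicator {w. g w = j} w * ennreal (real (f w)) \<partial>count_space UNIV)
          = (\<Sum>w\<in>A. indicator {w. g w = j} w * ennreal (real (f w)))"
        by (rule nn_integral_count_space'[OF Afin]) (auto simp: A_def)
      also have "\<dots> = (\<Sum>w\<in>A. ennreal (real (f w)))"
        by (intro sum.cong) (auto simp: A_def)
      also have "\<dots> = ennreal (real (\<Sum>w\<in>A. f w))"
        by (subst sum_ennreal) (auto simp: of_nat_sum)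
      also have "\<dots> = ennreal (real (proj_conf g f j))"
        unfolding proj_conf_def A_def by simp
      finally show "ennreal (real (proj_conf g f j)) =
          (\<integral>\<^sup>+w. indicator {w. g w = j} w * ennreal (real (f w)) \<partial>count_space UNIV)" by simp
    qed
  qed
  also have "\<dots> = (\<integral>\<^sup>+w. (\<integral>\<^sup>+f. indicator {w. g w = j} w * ennreal (real (f w)) \<partial>measure_pmf (\<mu> x)) \<partial>count_space UNIV)"
    by (rule nn_integral_count_space_nn_integral) auto
  also have "\<dots> = (\<integral>\<^sup>+y. indicator {y. g y = j} y * fm x y \<partial>count_space UNIV)"
    unfolding first_moment_def by (intro nn_integral_cong) (simp add: nn_integral_cmult)
  finally show ?thesis .
qed

end

lemma brw_fin: assumes "is_brw k" shows "first_moment k x y < top"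
proof -
  obtain C :: real where C: "\<And>x. (\<integral>\<^sup>+ y. first_moment k x y \<partial>count_space UNIV) \<le> ennreal C"
    using assms unfolding is_brw_def by blast
  then have "first_moment k x y \<le> ennreal C" using le_nn_integral_count[of "first_moment k x" y] order_trans by blast
  then show ?thesis using ennreal_less_top[of C] by (rule le_less_trans)
qed

context fbrw begin

definition "n i j = enn2real (first_moment \<nu> i j)"

lemma n_nn: "n i j \<ge> 0" unfolding n_def by simp

lemma n_pos: assumes "fm a b > 0" shows "n (g a) (g b) > 0"
proof -
  have "fm a b = indicator {y. g y = g b} b * fm a b" by simp
  also have "\<dots> \<le> first_moment \<nu> (g a) (g b)"
    unfolding bridge by (rule le_nn_integral_count[of "\<lambda>y. indicator {y. g y = g b} y * fm a y"])
  finally have "first_moment \<nu> (g a) (g b) > 0" using assms by simp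
  moreover have "first_moment \<nu> (g a) (g b) < top" by (rule brw_fin[OF brwn])
  ultimately show ?thesis unfolding n_def by (simp add: enn2real_positive_iff)
qed

lemma n_irr: "(i, j) \<in> {(a,b). n a b > 0}\<^sup>*"
proof -
  have sg: "surj g" using li unfolding locally_isomorphic_def by blast
  obtain x y where x: "g x = i" and y: "g y = j" using sg by (metis surjD)
  have "(x, y) \<in> {(a, b). 0 < fm a b}\<^sup>*" using irr unfolding irreducible_brw_def by blast
  then have "(g x, g y) \<in> {(a,b). n a b > 0}\<^sup>*"
  proof (induction rule: rtrancl_induct)
    case base then show ?case by simp
  next
    case (step b c)
    then have "n (g b) (g c) > 0" using n_pos by simp
    then show ?case using step(3) by (simp add: rtrancl.rtrancl_into_rtrancl)
  qed
  then show ?thesis using x y by simp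
qed

definition "PFpair = (SOME p. fst p \<ge> 0 \<and> (\<forall>i. snd p i > 0) \<and> (\<forall>i. (\<Sum>j\<in>UNIV. n i j * snd p j) = fst p * snd p i))"
definition "rho = fst PFpair"
definition "ww = snd PFpair"

lemma pf: "rho \<ge> 0" "ww i > 0" "(\<Sum>j\<in>UNIV. n i j * ww j) = rho * ww i"
proof -
  obtain r w where "r \<ge> 0 \<and> (\<forall>i. w i > 0) \<and> (\<forall>i. (\<Sum>j\<in>UNIV. n i j * w j) = r * w i)"
    using perron[of n, OF n_nn n_irr] by blast
  then have "\<exists>p. fst p \<ge> 0 \<and> (\<forall>i. snd p i > 0) \<and> (\<forall>i. (\<Sum>j\<in>UNIV. n i j * snd p j) = fst p * snd p i)"
    by (intro exI[of _ "(r, w)"]) simp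
  from someI_ex[OF this] show "rho \<ge> 0" "ww i > 0" "(\<Sum>j\<in>UNIV. n i j * ww j) = rho * ww i"
    unfolding rho_def ww_def PFpair_def by blast+
qed

definition "W x = ww (g x)"
definition "wmin = Min (range ww)"
definition "wmax = Max (range ww)"

lemma wbounds: "wmin > 0" "wmin \<le> W x" "W x \<le> wmax" "wmax > 0"
proof -
  have fin: "finite (range ww)" by simp
  have ne: "range ww \<noteq> {}" by simp
  have "wmin \<in> range ww" unfolding wmin_def using Min_in[OF fin ne] .
  then show "wmin > 0" using pf(2) by auto
  show "wmin \<le> W x" unfolding wmin_def W_def using fin by simp
  show "W x \<le> wmax" unfolding wmax_def W_def using fin by simp
  then show "wmax > 0" using pf(2)[of "g x"] unfolding W_def by simp
qed

lemma W_pos: "W x > 0" using pf(2) unfolding W_def by simp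

lemma weighted: "(\<integral>\<^sup>+y. fm x y * ennreal (W y) \<partial>count_space UNIV) = ennreal (rho * W x)"
proof -
  have "(\<integral>\<^sup>+y. fm x y * ennreal (W y) \<partial>count_space UNIV)
      = (\<integral>\<^sup>+y. (\<Sum>j\<in>UNIV. ennreal (ww j) * (indicator {y. g y = j} y * fm x y)) \<partial>count_space UNIV)"
  proof (intro nn_integral_cong)
    fix y
    have "(\<Sum>j\<in>UNIV. ennreal (ww j) * (indicator {y. g y = j} y * fm x y))
        = (\<Sum>j\<in>{g y}. ennreal (ww j) * (indicator {y. g y = j} y * fm x y))"
      by (intro sum.mono_neutral_right) auto
    then show "fm x y * ennreal (W y) = (\<Sum>j\<in>UNIV. ennreal (ww j) * (indicator {y. g y = j} y * fm x y))"
      unfolding W_def by (simp add: mult.commute)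
  qed
  also have "\<dots> = (\<Sum>j\<in>UNIV. ennreal (ww j) * first_moment \<nu> (g x) j)"
    by (subst nn_integral_sum) (auto simp: nn_integral_cmult bridge)
  also have "\<dots> = (\<Sum>j\<in>UNIV. ennreal (n (g x) j * ww j))"
  proof (intro sum.cong refl)
    fix j
    have "first_moment \<nu> (g x) j = ennreal (n (g x) j)"
      unfolding n_def using brw_fin[OF brwn] by simp
    then show "ennreal (ww j) * first_moment \<nu> (g x) j = ennreal (n (g x) j * ww j)"
      using pf(2)[of j] n_nn by (simp add: ennreal_mult mult.commute)
  qed
  also have "\<dots> = ennreal (\<Sum>j\<in>UNIV. n (g x) j * ww j)"
  proof (rule sum_ennreal)
    fix j show "0 \<le> n (g x) j * ww j" using n_nn[of "g x" j] pf(2)[of j] by simp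
  qed
  also have "\<dots> = ennreal (rho * W x)" unfolding pf(3) W_def ..
  finally show ?thesis .
qed

end

context fbrw begin

abbreviation "mp \<equiv> moment_pow \<mu>"

lemma swap_cs:
  fixes f :: "'a::countable \<Rightarrow> 'b::countable \<Rightarrow> ennreal"
  shows "(\<integral>\<^sup>+x. \<integral>\<^sup>+y. f x y \<partial>count_space UNIV \<partial>count_space UNIV)
       = (\<integral>\<^sup>+y. \<integral>\<^sup>+x. f x y \<partial>count_space UNIV \<partial>count_space UNIV)"
  by (rule nn_integral_count_space_nn_integral) auto

lemma mp_weighted: "(\<integral>\<^sup>+y. mp k x y * ennreal (W y) \<partial>count_space UNIV) = ennreal (rho^k * W x)"
proof (induction k arbitrary: x)
  case 0
  have "(\<integral>\<^sup>+y. mp 0 x y * ennreal (W y) \<partial>count_space UNIV) = (\<Sum>y\<in>{x}. mp 0 x y * ennreal (W y))"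
    by (rule nn_integral_count_space') auto
  then show ?case by simp
next
  case (Suc k)
  have "(\<integral>\<^sup>+y. mp (Suc k) x y * ennreal (W y) \<partial>count_space UNIV)
      = (\<integral>\<^sup>+y. \<integral>\<^sup>+z. fm x z * mp k z y * ennreal (W y) \<partial>count_space UNIV \<partial>count_space UNIV)"
    by (simp add: nn_integral_multc)
  also have "\<dots> = (\<integral>\<^sup>+z. \<integral>\<^sup>+y. fm x z * (mp k z y * ennreal (W y)) \<partial>count_space UNIV \<partial>count_space UNIV)"
    by (subst swap_cs) (simp add: mult.assoc)
  also have "\<dots> = (\<integral>\<^sup>+z. fm x z * ennreal (rho^k * W z) \<partial>count_space UNIV)"
    by (simp add: nn_integral_cmult Suc.IH)
  also have "\<dots> = (\<integral>\<^sup>+z. (fm x z * ennreal (W z)) * ennreal (rho^k) \<partial>count_space UNIV)"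
    using pf(1) W_pos by (intro nn_integral_cong) (simp add: ennreal_mult mult_ac less_imp_le)
  also have "\<dots> = ennreal (rho * W x) * ennreal (rho^k)"
    by (simp add: nn_integral_multc weighted)
  also have "\<dots> = ennreal (rho^Suc k * W x)"
    using pf(1) W_pos[of x] by (simp add: ennreal_mult[symmetric] mult_ac)
  finally show ?case .
qed

lemma mp_fin: "mp k x y < top"
proof -
  have "mp k x y * ennreal (W y) \<le> ennreal (rho^k * W x)"
    using le_nn_integral_count[of "\<lambda>y. mp k x y * ennreal (W y)" y] mp_weighted by simp
  then have "mp k x y * ennreal (W y) < top" using ennreal_less_top le_less_trans by blast
  then show ?thesis using W_pos[of y] by (auto simp: ennreal_mult_less_top)
qed

lemma rowsum_upper: "ennreal wmin * (\<integral>\<^sup>+y. mp k x y \<partial>count_space UNIV) \<le> ennreal (rho^k * W x)"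
proof -
  have "ennreal wmin * (\<integral>\<^sup>+y. mp k x y \<partial>count_space UNIV) = (\<integral>\<^sup>+y. mp k x y * ennreal wmin \<partial>count_space UNIV)"
    by (subst nn_integral_multc) (auto simp: mult.commute)
  also have "\<dots> \<le> (\<integral>\<^sup>+y. mp k x y * ennreal (W y) \<partial>count_space UNIV)"
    using wbounds by (intro nn_integral_mono mult_left_mono) (auto intro: ennreal_leI)
  finally show ?thesis unfolding mp_weighted .
qed

lemma rowsum_lower: "ennreal (rho^k * W x) \<le> ennreal wmax * (\<integral>\<^sup>+y. mp k x y \<partial>count_space UNIV)"
proof -
  have "ennreal (rho^k * W x) = (\<integral>\<^sup>+y. mp k x y * ennreal (W y) \<partial>count_space UNIV)"
    unfolding mp_weighted ..
  also have "\<dots> \<le> (\<integral>\<^sup>+y. mp k x y * ennreal wmax \<partial>count_space UNIV)"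
    using wbounds by (intro nn_integral_mono mult_left_mono) auto
  also have "\<dots> = ennreal wmax * (\<integral>\<^sup>+y. mp k x y \<partial>count_space UNIV)"
    by (subst nn_integral_multc) (auto simp: mult.commute)
  finally show ?thesis .
qed

lemma mp_add: "mp (p + q) x y = (\<integral>\<^sup>+z. mp p x z * mp q z y \<partial>count_space UNIV)"
proof (induction p arbitrary: x)
  case 0
  have "(\<integral>\<^sup>+z. mp 0 x z * mp q z y \<partial>count_space UNIV) = (\<Sum>z\<in>{x}. mp 0 x z * mp q z y)"
    by (rule nn_integral_count_space') auto
  then show ?case by simp
next
  case (Suc p)
  have "mp (Suc p + q) x y = (\<integral>\<^sup>+a. fm x a * (\<integral>\<^sup>+z. mp p a z * mp q z y \<partial>count_space UNIV) \<partial>count_space UNIV)"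
    by (simp add: Suc.IH)
  also have "\<dots> = (\<integral>\<^sup>+a. \<integral>\<^sup>+z. fm x a * mp p a z * mp q z y \<partial>count_space UNIV \<partial>count_space UNIV)"
    by (simp add: nn_integral_cmult mult.assoc)
  also have "\<dots> = (\<integral>\<^sup>+z. \<integral>\<^sup>+a. fm x a * mp p a z * mp q z y \<partial>count_space UNIV \<partial>count_space UNIV)"
    by (rule swap_cs)
  also have "\<dots> = (\<integral>\<^sup>+z. mp (Suc p) x z * mp q z y \<partial>count_space UNIV)"
    by (simp add: nn_integral_multc)
  finally show ?case .
qed

lemma mp_ge: "mp p x z * mp q z y \<le> mp (p + q) x y"
  unfolding mp_add by (rule le_nn_integral_count[of "\<lambda>z. mp p x z * mp q z y"])

lemma mp_one: "mp (Suc 0) x y = fm x y"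
proof -
  have "(\<integral>\<^sup>+z. fm x z * mp 0 z y \<partial>count_space UNIV) = (\<Sum>z\<in>{y}. fm x z * mp 0 z y)"
    by (rule nn_integral_count_space') auto
  then show ?thesis by simp
qed

lemma mp_pos: "\<exists>k. mp k a b > 0"
proof -
  have "(a, b) \<in> {(a, b). 0 < fm a b}\<^sup>*" using irr unfolding irreducible_brw_def by blast
  then show ?thesis
  proof (induction rule: rtrancl_induct)
    case base then show ?case by (intro exI[of _ 0]) simp
  next
    case (step b c)
    then obtain k where k: "mp k a b > 0" by blast
    have "0 < mp k a b * mp (Suc 0) b c" unfolding mp_one using k step(2) by (simp add: ennreal_zero_less_mult_iff)
    also have "\<dots> \<le> mp (k + Suc 0) a c" by (rule mp_ge)
    finally show ?case by blast
  qed
qed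

end

primrec tr :: "('a \<Rightarrow> 'a \<Rightarrow> real) \<Rightarrow> 'a set \<Rightarrow> nat \<Rightarrow> 'a \<Rightarrow> 'a \<Rightarrow> real" where
  "tr a F 0 x y = (if x = y then 1 else 0)"
| "tr a F (Suc k) x y = (\<Sum>z\<in>F. a x z * tr a F k z y)"

lemma tr_nn: "(\<And>x y. a x y \<ge> 0) \<Longrightarrow> tr a F k x y \<ge> 0"
  by (induction k arbitrary: x) (auto intro!: sum_nonneg)

lemma tr_mono:
  assumes "\<And>x y. a x y \<ge> 0" "F \<subseteq> G" "finite G"
  shows "tr a F k x y \<le> tr a G k x y"
proof (induction k arbitrary: x)
  case 0 then show ?case by simp
next
  case (Suc k)
  have "(\<Sum>z\<in>F. a x z * tr a F k z y) \<le> (\<Sum>z\<in>F. a x z * tr a G k z y)"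
    using Suc.IH assms(1) by (intro sum_mono mult_left_mono) auto
  also have "\<dots> \<le> (\<Sum>z\<in>G. a x z * tr a G k z y)"
    using assms tr_nn[of a] by (intro sum_mono2) auto
  finally show ?case by simp
qed

lemma SUP_diag:
  fixes f :: "nat \<Rightarrow> nat \<Rightarrow> ennreal"
  assumes m1: "\<And>i i' j. i \<le> i' \<Longrightarrow> f i j \<le> f i' j" and m2: "\<And>i j j'. j \<le> j' \<Longrightarrow> f i j \<le> f i j'"
  shows "(SUP i. SUP j. f i j) = (SUP l. f l l)"
proof (rule antisym)
  show "(SUP i. SUP j. f i j) \<le> (SUP l. f l l)"
  proof (intro SUP_least)
    fix i j
    have "f i j \<le> f (max i j) (max i j)"
      using m1[of i "max i j" j] m2[of j "max i j" "max i j"] by (meson max.cobounded1 max.cobounded2 order_trans)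
    also have "\<dots> \<le> (SUP l. f l l)" by (rule SUP_upper) simp
    finally show "f i j \<le> (SUP l. f l l)" .
  qed
  show "(SUP l. f l l) \<le> (SUP i. SUP j. f i j)"
  proof (intro SUP_least)
    fix l
    have "f l l \<le> (SUP j. f l j)" by (rule SUP_upper) simp
    also have "\<dots> \<le> (SUP i. SUP j. f i j)" by (rule SUP_upper[where f="\<lambda>i. SUP j. f i j"]) simp
    finally show "f l l \<le> (SUP i. SUP j. f i j)" .
  qed
qed

context fbrw begin

definition Fk :: "nat \<Rightarrow> 'x set" where "Fk j = {x. to_nat x < j}"

lemma Fk_finite: "finite (Fk j)"
proof -
  have "Fk j = to_nat -` {..<j}" unfolding Fk_def by auto
  then show ?thesis by (simp add: finite_vimageI)
qed

lemma Fk_mono: "i \<le> j \<Longrightarrow> Fk i \<subseteq> Fk j" unfolding Fk_def by auto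

lemma int_SUP_ind: "(\<integral>\<^sup>+z. f z \<partial>count_space UNIV) = (SUP j. \<Sum>z\<in>Fk j. f z)"
proof -
  have pw: "f z = (SUP j. f z * indicator (Fk j) z)" for z
  proof (rule antisym)
    have "f z = f z * indicator (Fk (Suc (to_nat z))) z" unfolding Fk_def by simp
    also have "\<dots> \<le> (SUP j. f z * indicator (Fk j) z)" by (rule SUP_upper) simp
    finally show "f z \<le> (SUP j. f z * indicator (Fk j) z)" .
    show "(SUP j. f z * indicator (Fk j) z) \<le> f z"
      by (intro SUP_least) (auto simp: indicator_def)
  qed
  have inc: "incseq (\<lambda>j z. f z * indicator (Fk j) z)"
    unfolding incseq_def le_fun_def
    using Fk_mono by (auto simp: indicator_def intro!: mult_left_mono)
  have "(\<integral>\<^sup>+z. f z \<partial>count_space UNIV) = (\<integral>\<^sup>+z. (SUP j. f z * indicator (Fk j) z) \<partial>count_space UNIV)"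
    using pw by simp
  also have "\<dots> = (SUP j. \<integral>\<^sup>+z. f z * indicator (Fk j) z \<partial>count_space UNIV)"
    using nn_integral_monotone_convergence_SUP[OF inc] by simp
  also have "\<dots> = (SUP j. \<Sum>z\<in>Fk j. f z)"
  proof (intro SUP_cong refl)
    fix j
    have "(\<integral>\<^sup>+z. f z * indicator (Fk j) z \<partial>count_space UNIV) = (\<Sum>z\<in>Fk j. f z * indicator (Fk j) z)"
      by (rule nn_integral_count_space'[OF Fk_finite]) auto
    then show "(\<integral>\<^sup>+z. f z * indicator (Fk j) z \<partial>count_space UNIV) = (\<Sum>z\<in>Fk j. f z)" by simp
  qed
  finally show ?thesis .
qed

lemma tr_SUP: "mp k x y = (SUP j. ennreal (tr m (Fk j) k x y))"
proof (induction k arbitrary: x)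
  case 0 then show ?case by simp
next
  case (Suc k)
  define f where "f i j = (\<Sum>z\<in>Fk j. fm x z * ennreal (tr m (Fk i) k z y))" for i j
  have trm: "tr m (Fk i) k z y \<le> tr m (Fk i') k z y" if "i \<le> i'" for i i' z
    by (rule tr_mono[OF m_nn Fk_mono[OF that] Fk_finite])
  have inc: "incseq (\<lambda>i z. fm x z * ennreal (tr m (Fk i) k z y))"
    unfolding incseq_def le_fun_def using trm by (auto intro!: mult_left_mono ennreal_leI)
  have "mp (Suc k) x y = (\<integral>\<^sup>+z. fm x z * (SUP i. ennreal (tr m (Fk i) k z y)) \<partial>count_space UNIV)"
    by (simp add: Suc.IH)
  also have "\<dots> = (\<integral>\<^sup>+z. (SUP i. fm x z * ennreal (tr m (Fk i) k z y)) \<partial>count_space UNIV)"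
    by (simp add: SUP_mult_left_ennreal)
  also have "\<dots> = (SUP i. \<integral>\<^sup>+z. fm x z * ennreal (tr m (Fk i) k z y) \<partial>count_space UNIV)"
    using nn_integral_monotone_convergence_SUP[OF inc] by simp
  also have "\<dots> = (SUP i. SUP j. f i j)" unfolding f_def int_SUP_ind ..
  also have "\<dots> = (SUP l. f l l)"
  proof (rule SUP_diag)
    fix i i' j :: nat assume "i \<le> i'"
    then show "f i j \<le> f i' j" unfolding f_def using trm
      by (intro sum_mono mult_left_mono ennreal_leI) auto
  next
    fix i j j' :: nat assume "j \<le> j'"
    then show "f i j \<le> f i j'" unfolding f_def using Fk_mono Fk_finite
      by (intro sum_mono2) auto
  qed
  also have "\<dots> = (SUP l. ennreal (tr m (Fk l) (Suc k) x y))"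
  proof (intro SUP_cong refl)
    fix l
    have "f l l = (\<Sum>z\<in>Fk l. ennreal (m x z * tr m (Fk l) k z y))"
      unfolding f_def fm_m using m_nn tr_nn[of m, OF m_nn] by (intro sum.cong refl) (simp add: ennreal_mult m_nn)
    also have "\<dots> = ennreal (tr m (Fk l) (Suc k) x y)"
      using m_nn tr_nn[of m, OF m_nn] by (subst sum_ennreal) auto
    finally show "f l l = ennreal (tr m (Fk l) (Suc k) x y)" .
  qed
  finally show ?case .
qed

lemma tr_le_mp: assumes "finite F" shows "ennreal (tr m F k x y) \<le> mp k x y"
proof -
  obtain j where "F \<subseteq> Fk j"
  proof -
    have "F \<subseteq> Fk (Suc (Max (to_nat ` F)))"
      using assms unfolding Fk_def by (auto simp: less_Suc_eq_le intro!: Max_ge)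
    then show ?thesis using that by blast
  qed
  then have "tr m F k x y \<le> tr m (Fk j) k x y" by (rule tr_mono[OF m_nn _ Fk_finite])
  then have "ennreal (tr m F k x y) \<le> ennreal (tr m (Fk j) k x y)" by (rule ennreal_leI)
  also have "\<dots> \<le> mp k x y" unfolding tr_SUP[of k x y] by (rule SUP_upper) simp
  finally show ?thesis .
qed

end

context fbrw begin

definition "val S = (\<Sum>x\<in>S. \<integral>\<^sup>+y. indicator (- S) y * fm x y \<partial>count_space UNIV)"
definition "Rb S x = (\<integral>\<^sup>+y. indicator (- S) y * fm x y * ennreal (W y) \<partial>count_space UNIV)"
definition "Ob S x = (\<integral>\<^sup>+y. indicator (- S) y * fm x y \<partial>count_space UNIV)"

lemma Ob_fin: "Ob S x < top"
proof -
  obtain C :: real where C: "\<And>x. (\<integral>\<^sup>+ y. fm x y \<partial>count_space UNIV) \<le> ennreal C" using row_bound by blast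
  have "Ob S x \<le> (\<integral>\<^sup>+ y. fm x y \<partial>count_space UNIV)" unfolding Ob_def
    by (intro nn_integral_mono) (auto simp: indicator_def)
  also have "\<dots> \<le> ennreal C" by (rule C)
  finally show ?thesis using ennreal_less_top[of C] by (rule le_less_trans)
qed

lemma val_Ob: "val S = (\<Sum>x\<in>S. Ob S x)" unfolding val_def Ob_def ..

lemma split_weighted:
  assumes S: "finite S"
  shows "ennreal (rho * W x) = ennreal (\<Sum>y\<in>S. m x y * W y) + Rb S x"
proof -
  have "ennreal (rho * W x) = (\<integral>\<^sup>+y. fm x y * ennreal (W y) \<partial>count_space UNIV)" by (simp add: weighted)
  also have "\<dots> = (\<integral>\<^sup>+y. indicator S y * (fm x y * ennreal (W y)) + indicator (- S) y * fm x y * ennreal (W y) \<partial>count_space UNIV)"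
    by (intro nn_integral_cong) (auto simp: indicator_def)
  also have "\<dots> = (\<integral>\<^sup>+y. indicator S y * (fm x y * ennreal (W y)) \<partial>count_space UNIV) + Rb S x"
    unfolding Rb_def by (rule nn_integral_add) auto
  also have "(\<integral>\<^sup>+y. indicator S y * (fm x y * ennreal (W y)) \<partial>count_space UNIV) = (\<Sum>y\<in>S. indicator S y * (fm x y * ennreal (W y)))"
    by (rule nn_integral_count_space'[OF S]) auto
  also have "\<dots> = (\<Sum>y\<in>S. ennreal (m x y * W y))"
    using W_pos m_nn by (intro sum.cong refl) (simp add: fm_m ennreal_mult less_imp_le)
  also have "\<dots> = ennreal (\<Sum>y\<in>S. m x y * W y)"
    using W_pos m_nn by (intro sum_ennreal) (simp add: less_imp_le)
  finally show ?thesis .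
qed

lemma Rb_fin: assumes "finite S" shows "Rb S x < top"
proof -
  have "Rb S x \<le> ennreal (rho * W x)" using split_weighted[OF assms, of x] by simp
  then show ?thesis using ennreal_less_top[of "rho * W x"] by (rule le_less_trans)
qed

lemma split_real:
  assumes S: "finite S"
  shows "rho * W x = (\<Sum>y\<in>S. m x y * W y) + enn2real (Rb S x)"
proof -
  have nn: "0 \<le> (\<Sum>y\<in>S. m x y * W y)" using W_pos m_nn by (intro sum_nonneg) (simp add: less_imp_le)
  have "rho * W x = enn2real (ennreal (rho * W x))" using pf(1) W_pos[of x] by simp
  also have "\<dots> = enn2real (ennreal (\<Sum>y\<in>S. m x y * W y)) + enn2real (Rb S x)"
    unfolding split_weighted[OF S] using Rb_fin[OF S] by (simp add: enn2real_plus)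
  finally show ?thesis using nn by simp
qed

lemma Rb_lower: "ennreal wmin * Ob S x \<le> Rb S x"
proof -
  have "ennreal wmin * Ob S x = (\<integral>\<^sup>+y. indicator (- S) y * fm x y * ennreal wmin \<partial>count_space UNIV)"
    unfolding Ob_def by (subst nn_integral_multc) (auto simp: mult.commute)
  also have "\<dots> \<le> Rb S x" unfolding Rb_def using wbounds
    by (intro nn_integral_mono mult_left_mono) (auto intro: ennreal_leI)
  finally show ?thesis .
qed

lemma Rb_upper: "Rb S x \<le> ennreal wmax * Ob S x"
proof -
  have "Rb S x \<le> (\<integral>\<^sup>+y. indicator (- S) y * fm x y * ennreal wmax \<partial>count_space UNIV)"
    unfolding Rb_def using wbounds
    by (intro nn_integral_mono mult_left_mono) (auto intro: ennreal_leI)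
  also have "\<dots> = ennreal wmax * Ob S x"
    unfolding Ob_def by (subst nn_integral_multc) (auto simp: mult.commute)
  finally show ?thesis .
qed

lemma Rb_lower_real: assumes "finite S" shows "wmin * enn2real (Ob S x) \<le> enn2real (Rb S x)"
proof -
  have "ennreal (wmin * enn2real (Ob S x)) = ennreal wmin * Ob S x"
    using wbounds(1) Ob_fin by (simp add: ennreal_mult)
  also have "\<dots> \<le> Rb S x" by (rule Rb_lower)
  also have "\<dots> = ennreal (enn2real (Rb S x))" using Rb_fin[OF assms] by simp
  finally have "ennreal (wmin * enn2real (Ob S x)) \<le> ennreal (enn2real (Rb S x))" .
  then show ?thesis by (subst (asm) ennreal_le_iff) auto
qed

lemma Rb_upper_real: assumes "finite S" shows "enn2real (Rb S x) \<le> wmax * enn2real (Ob S x)"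
proof -
  have "ennreal (enn2real (Rb S x)) = Rb S x" using Rb_fin[OF assms] by simp
  also have "\<dots> \<le> ennreal wmax * Ob S x" by (rule Rb_upper)
  also have "\<dots> = ennreal (wmax * enn2real (Ob S x))"
    using wbounds(4) Ob_fin by (simp add: ennreal_mult)
  finally have "ennreal (enn2real (Rb S x)) \<le> ennreal (wmax * enn2real (Ob S x))" .
  then show ?thesis using wbounds(4) by (subst (asm) ennreal_le_iff) auto
qed

lemma Ob_real: "enn2real (val S) = (\<Sum>x\<in>S. enn2real (Ob S x))"
  unfolding val_Ob using Ob_fin by (subst enn2real_sum) auto

end

context fbrw begin

lemma val_fin: "val S < top"
  unfolding val_Ob using Ob_fin by (cases "finite S") auto

lemma kappa:
  assumes na: "nonamenable \<mu>"
  obtains \<kappa> where "\<kappa> > 0" "\<And>S. finite S \<Longrightarrow> \<kappa> * real (card S) \<le> enn2real (val S)"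
proof -
  define D where "D = (INF S\<in>{S. finite S \<and> S \<noteq> {}}.
            (\<Sum>x\<in>S. \<integral>\<^sup>+ y. indicator (- S) y * first_moment \<mu> x y \<partial>count_space UNIV)
              / of_nat (card S))"
  have Dpos: "0 < D" using na unfolding nonamenable_def D_def .
  define \<kappa> where "\<kappa> = enn2real (min D 1)"
  have mfin: "min D 1 < top" by (simp add: min_less_iff_disj)
  have ek: "ennreal \<kappa> = min D 1" unfolding \<kappa>_def using mfin by simp
  have kpos: "\<kappa> > 0" unfolding \<kappa>_def using Dpos mfin by (simp add: enn2real_positive_iff)
  show ?thesis
  proof (rule that[OF kpos])
    fix S :: "'x set" assume S: "finite S"
    show "\<kappa> * real (card S) \<le> enn2real (val S)"
    proof (cases "S = {}")
      case True then show ?thesis by simp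
    next
      case False
      have "D \<le> val S / of_nat (card S)"
        unfolding D_def val_def using S False by (intro INF_lower) auto
      then have le: "ennreal \<kappa> \<le> val S / of_nat (card S)" unfolding ek by (simp add: min.coboundedI1)
      have cpos: "of_nat (card S) \<noteq> (0::ennreal)" using S False by simp
      have "ennreal \<kappa> * of_nat (card S) \<le> val S"
      proof (rule ccontr)
        assume "\<not> ennreal \<kappa> * of_nat (card S) \<le> val S"
        then have "val S < ennreal \<kappa> * of_nat (card S)" by simp
        then have "val S / of_nat (card S) < ennreal \<kappa>"
          using cpos by (subst divide_less_ennreal) (auto simp: of_nat_less_top)
        then show False using le by simp
      qed
      then have "ennreal (\<kappa> * real (card S)) \<le> ennreal (enn2real (val S))"
        using val_fin[of S] kpos by (simp add: ennreal_mult ennreal_of_nat_eq_real_of_nat)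
      then show ?thesis by (subst (asm) ennreal_le_iff) auto
    qed
  qed
qed

lemma rho_pos:
  assumes na: "nonamenable \<mu>"
  shows "rho > 0"
proof -
  obtain \<kappa> where kp: "\<kappa> > 0" and kS: "\<And>S. finite S \<Longrightarrow> \<kappa> * real (card S) \<le> enn2real (val S)"
    using kappa[OF na] by blast
  define x0 :: 'x where "x0 = undefined"
  have "\<kappa> \<le> enn2real (Ob {x0} x0)" using kS[of "{x0}"] unfolding Ob_real by simp
  then have "wmin * \<kappa> \<le> wmin * enn2real (Ob {x0} x0)" using wbounds(1) by simp
  also have "\<dots> \<le> enn2real (Rb {x0} x0)" by (rule Rb_lower_real) simp
  also have "\<dots> \<le> rho * W x0" using split_real[of "{x0}" x0] m_nn[of x0 x0] W_pos[of x0] by simp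
  finally have le: "wmin * \<kappa> \<le> rho * W x0" .
  have "0 < wmin * \<kappa>" using wbounds(1) kp by simp
  then have "0 < rho * W x0" using le by linarith
  then show ?thesis using W_pos[of x0] by (simp add: zero_less_mult_iff)
qed

end

context fbrw begin

lemma quad_bound:
  assumes na: "nonamenable \<mu>"
  obtains \<theta> where "0 \<le> \<theta>" "\<theta> < rho"
    "\<And>F u. finite F \<Longrightarrow> (\<And>x. x \<in> F \<Longrightarrow> u x \<ge> 0) \<Longrightarrow>
        (\<Sum>x\<in>F. \<Sum>y\<in>F. m x y * u x * u y) \<le> \<theta> * (\<Sum>x\<in>F. (u x)\<^sup>2)"
proof -
  obtain \<kappa> where kp: "\<kappa> > 0" and kS: "\<And>S. finite S \<Longrightarrow> \<kappa> * real (card S) \<le> enn2real (val S)"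
    using kappa[OF na] by blast
  have rp: "rho > 0" by (rule rho_pos[OF na])
  define \<kappa>' where "\<kappa>' = wmin\<^sup>2 * \<kappa> / wmax\<^sup>2"
  have kp': "\<kappa>' > 0" unfolding \<kappa>'_def using kp wbounds by simp
  define \<theta>0 where "\<theta>0 = rho - \<kappa>'\<^sup>2 / (8 * rho)"
  define \<theta> where "\<theta> = max \<theta>0 0"
  have th0: "\<theta>0 < rho" unfolding \<theta>0_def using rp kp' by simp
  show ?thesis
  proof (rule that[of \<theta>])
    show "0 \<le> \<theta>" unfolding \<theta>_def by simp
    show "\<theta> < rho" unfolding \<theta>_def using th0 rp by simp
    fix F :: "'x set" and u :: "'x \<Rightarrow> real" assume F: "finite F" and unn: "\<And>x. x \<in> F \<Longrightarrow> u x \<ge> 0"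
    define b where "b x y = W x * m x y * W y" for x y
    define p where "p x = (W x)\<^sup>2" for x
    define f where "f x = u x / W x" for x
    have Wp: "W x > 0" for x by (rule W_pos)
    have bsym: "b x y = b y x" for x y unfolding b_def using m_sym by simp
    have bnn: "b x y \<ge> 0" for x y unfolding b_def using m_nn Wp by (simp add: less_imp_le)
    have rowid: "(\<Sum>y\<in>S. b x y) = W x * (\<Sum>y\<in>S. m x y * W y)" for S x
      unfolding b_def by (simp add: sum_distrib_left mult.assoc)
    have subinv: "(\<Sum>y\<in>F. b x y) \<le> rho * p x" for x
    proof -
      have "(\<Sum>y\<in>F. m x y * W y) \<le> rho * W x" using split_real[OF F, of x] by simp
      then have "W x * (\<Sum>y\<in>F. m x y * W y) \<le> W x * (rho * W x)" using Wp[of x] by simp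
      then show ?thesis unfolding rowid p_def by (simp add: power2_eq_square mult_ac)
    qed
    have IS: "(\<Sum>x\<in>S. rho * p x - (\<Sum>y\<in>S. b x y)) \<ge> \<kappa>' * (\<Sum>x\<in>S. p x)"
      if S: "finite S" "S \<subseteq> F" for S
    proof -
      have trm: "rho * p x - (\<Sum>y\<in>S. b x y) = W x * enn2real (Rb S x)" for x
      proof -
        have e: "rho * W x = (\<Sum>y\<in>S. m x y * W y) + enn2real (Rb S x)" by (rule split_real[OF S(1)])
        have "rho * p x - (\<Sum>y\<in>S. b x y) = W x * (rho * W x) - W x * (\<Sum>y\<in>S. m x y * W y)"
          unfolding rowid p_def by (simp add: power2_eq_square mult_ac)
        also have "\<dots> = W x * enn2real (Rb S x)" unfolding e by (simp add: algebra_simps)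
        finally show ?thesis .
      qed
      have tl: "wmin * (wmin * enn2real (Ob S x)) \<le> W x * enn2real (Rb S x)" for x
        using Rb_lower_real[OF S(1), of x] wbounds(1) wbounds(2)[of x]
        by (intro mult_mono) (auto simp: mult_nonneg_nonneg)
      have "\<kappa>' * (\<Sum>x\<in>S. p x) \<le> \<kappa>' * (\<Sum>x\<in>S. wmax\<^sup>2)"
        using kp' wbounds(1,2,3) unfolding p_def
        by (intro mult_left_mono sum_mono power_mono) (auto intro: order.trans[OF less_imp_le])
      also have "\<dots> = wmin\<^sup>2 * (\<kappa> * real (card S))"
        unfolding \<kappa>'_def using wbounds(4) by (simp add: field_simps)
      also have "\<dots> \<le> wmin\<^sup>2 * enn2real (val S)" using kS[OF S(1)] by (intro mult_left_mono) auto
      also have "\<dots> = (\<Sum>x\<in>S. wmin * (wmin * enn2real (Ob S x)))"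
        unfolding Ob_real by (simp add: sum_distrib_left power2_eq_square mult.assoc)
      also have "\<dots> \<le> (\<Sum>x\<in>S. rho * p x - (\<Sum>y\<in>S. b x y))"
        unfolding trm by (intro sum_mono tl)
      finally show ?thesis .
    qed
    have fnn: "f x \<ge> 0" if "x \<in> F" for x unfolding f_def using unn[OF that] Wp[of x] by simp
    have ch: "(\<Sum>x\<in>F. \<Sum>y\<in>F. b x y * f x * f y) \<le> (rho - \<kappa>'\<^sup>2 / (8 * rho)) * (\<Sum>x\<in>F. p x * (f x)\<^sup>2)"
      by (rule cheeger[OF F rp kp' bsym bnn subinv IS fnn])
    have e1: "b x y * f x * f y = m x y * u x * u y" for x y
      unfolding b_def f_def using Wp[of x] Wp[of y] by (simp add: field_simps)
    have e2: "p x * (f x)\<^sup>2 = (u x)\<^sup>2" for x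
      unfolding p_def f_def using Wp[of x] by (simp add: field_simps power2_eq_square)
    have "(\<Sum>x\<in>F. \<Sum>y\<in>F. m x y * u x * u y) \<le> \<theta>0 * (\<Sum>x\<in>F. (u x)\<^sup>2)"
      using ch unfolding e1 e2 \<theta>0_def .
    also have "\<dots> \<le> \<theta> * (\<Sum>x\<in>F. (u x)\<^sup>2)"
      unfolding \<theta>_def by (intro mult_right_mono) (auto intro: sum_nonneg)
    finally show "(\<Sum>x\<in>F. \<Sum>y\<in>F. m x y * u x * u y) \<le> \<theta> * (\<Sum>x\<in>F. (u x)\<^sup>2)" .
  qed
qed

end

context fbrw begin

lemma mp_upper:
  assumes th: "0 \<le> \<theta>"
    and Qb: "\<And>F u. finite F \<Longrightarrow> (\<And>x. x \<in> F \<Longrightarrow> u x \<ge> 0) \<Longrightarrow>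
        (\<Sum>x\<in>F. \<Sum>y\<in>F. m x y * u x * u y) \<le> \<theta> * (\<Sum>x\<in>F. (u x)\<^sup>2)"
  shows "enn2real (mp k x y) \<le> \<theta>^k"
proof -
  have trb: "tr m F k x y \<le> \<theta>^k" if F: "finite F" and xF: "x \<in> F" for F
  proof -
    define N where "N k = (\<Sum>z\<in>F. (tr m F k z y)\<^sup>2)" for k
    have nb: "(\<Sum>x\<in>F. (\<Sum>y\<in>F. m x y * v y)\<^sup>2) \<le> \<theta>\<^sup>2 * (\<Sum>x\<in>F. (v x)\<^sup>2)" for v
      by (rule norm_bound[OF F m_sym m_nn th Qb[OF F]])
    have Ns: "N (Suc k) \<le> \<theta>\<^sup>2 * N k" for k
      unfolding N_def using nb[of "\<lambda>z. tr m F k z y"] by simp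
    have N0: "N 0 \<le> 1"
    proof -
      have "N 0 = (\<Sum>z\<in>F. if z = y then 1 else 0)" unfolding N_def by (intro sum.cong) auto
      also have "\<dots> \<le> 1" using F by (simp add: sum.delta)
      finally show ?thesis .
    qed
    have Nk: "N k \<le> \<theta>^(2*k)" for k
    proof (induction k)
      case 0 then show ?case using N0 by simp
    next
      case (Suc k)
      have "N (Suc k) \<le> \<theta>\<^sup>2 * N k" by (rule Ns)
      also have "\<dots> \<le> \<theta>\<^sup>2 * \<theta>^(2*k)" using Suc.IH by (intro mult_left_mono) auto
      also have "\<dots> = \<theta>^(2 * Suc k)" by (simp add: power_add power2_eq_square power_mult_distrib mult_ac)
      finally show ?case .
    qed
    have "(tr m F k x y)\<^sup>2 \<le> N k"
      unfolding N_def using F xF by (intro member_le_sum) auto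
    also have "\<dots> \<le> (\<theta>^k)\<^sup>2" using Nk[of k] by (simp add: power_mult[symmetric] mult.commute)
    finally have "(tr m F k x y)\<^sup>2 \<le> (\<theta>^k)\<^sup>2" .
    then show ?thesis by (rule power2_le_imp_le) (simp add: th)
  qed
  have "mp k x y \<le> ennreal (\<theta>^k)"
    unfolding tr_SUP
  proof (intro SUP_least)
    fix j
    define j' where "j' = max j (Suc (to_nat x))"
    have "tr m (Fk j) k x y \<le> tr m (Fk j') k x y"
      unfolding j'_def by (rule tr_mono[OF m_nn Fk_mono Fk_finite]) simp
    also have "\<dots> \<le> \<theta>^k" using trb[OF Fk_finite] unfolding j'_def Fk_def by simp
    finally show "ennreal (tr m (Fk j) k x y) \<le> ennreal (\<theta>^k)" by (rule ennreal_leI)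
  qed
  then show ?thesis using th by (intro enn2real_leI) auto
qed

lemma Ms_le:
  assumes th: "0 \<le> \<theta>"
    and Qb: "\<And>F u. finite F \<Longrightarrow> (\<And>x. x \<in> F \<Longrightarrow> u x \<ge> 0) \<Longrightarrow>
        (\<Sum>x\<in>F. \<Sum>y\<in>F. m x y * u x * u y) \<le> \<theta> * (\<Sum>x\<in>F. (u x)\<^sup>2)"
  shows "M_s \<mu> x y \<le> ereal \<theta>"
  unfolding M_s_def
proof (intro Limsup_bounded always_eventually allI)
  fix k
  show "ereal (root k (enn2real (mp k x y))) \<le> ereal \<theta>"
  proof (cases "k = 0")
    case True then show ?thesis using th by simp
  next
    case False
    then have "root k (enn2real (mp k x y)) \<le> root k (\<theta>^k)"
      using mp_upper[OF th Qb] by (intro real_root_le_mono) auto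
    also have "\<dots> = \<theta>" using False th by (simp add: real_root_power_cancel)
    finally show ?thesis by simp
  qed
qed

lemma rs_fin: "(\<integral>\<^sup>+y. mp k x y \<partial>count_space UNIV) < top"
proof -
  have "ennreal wmin * (\<integral>\<^sup>+y. mp k x y \<partial>count_space UNIV) < top"
    using rowsum_upper[of k x] ennreal_less_top[of "rho^k * W x"] by (rule le_less_trans)
  then show ?thesis using wbounds(1) by (auto simp: ennreal_mult_less_top)
qed

lemma rs_bounds:
  shows "rho^k * W x \<le> wmax * enn2real (\<integral>\<^sup>+y. mp k x y \<partial>count_space UNIV)"
    "wmin * enn2real (\<integral>\<^sup>+y. mp k x y \<partial>count_space UNIV) \<le> rho^k * W x"
proof -
  define t where "t = enn2real (\<integral>\<^sup>+y. mp k x y \<partial>count_space UNIV)"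
  have I: "(\<integral>\<^sup>+y. mp k x y \<partial>count_space UNIV) = ennreal t" unfolding t_def using rs_fin by simp
  have tn: "t \<ge> 0" unfolding t_def by simp
  have pn: "rho^k * W x \<ge> 0" using pf(1) W_pos[of x] by simp
  have "ennreal (rho^k * W x) \<le> ennreal (wmax * t)"
    using rowsum_lower[of k x] unfolding I using wbounds(4) tn by (simp add: ennreal_mult)
  then show "rho^k * W x \<le> wmax * enn2real (\<integral>\<^sup>+y. mp k x y \<partial>count_space UNIV)" unfolding t_def[symmetric] by (subst (asm) ennreal_le_iff) (use wbounds(4) tn in auto)
  have "ennreal (wmin * t) \<le> ennreal (rho^k * W x)"
    using rowsum_upper[of k x] unfolding I using wbounds(1) tn by (simp add: ennreal_mult)
  then show "wmin * enn2real (\<integral>\<^sup>+y. mp k x y \<partial>count_space UNIV) \<le> rho^k * W x" unfolding t_def[symmetric] by (subst (asm) ennreal_le_iff) (use pn in auto)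
qed

lemma root_lim: assumes "c > 0" shows "(\<lambda>k. ereal (root k c * rho)) \<longlonglongrightarrow> ereal rho"
proof -
  have "(\<lambda>k. root k c * rho) \<longlonglongrightarrow> 1 * rho" by (intro tendsto_mult LIMSEQ_root_const assms tendsto_const)
  then show ?thesis by simp
qed

lemma Mw_ge: "ereal rho \<le> M_w \<mu> x"
proof -
  define c where "c = W x / wmax"
  have cp: "c > 0" unfolding c_def using W_pos wbounds by simp
  have "ereal rho = liminf (\<lambda>k. ereal (root k c * rho))"
    using lim_imp_Liminf[OF _ root_lim[OF cp]] by simp
  also have "\<dots> \<le> M_w \<mu> x" unfolding M_w_def
  proof (intro Liminf_mono eventually_sequentiallyI[of 1])
    fix k :: nat assume k: "1 \<le> k"
    define t where "t = enn2real (\<integral>\<^sup>+y. mp k x y \<partial>count_space UNIV)"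
    have "rho^k * W x \<le> wmax * t" unfolding t_def by (rule rs_bounds)
    then have "c * rho^k \<le> t" unfolding c_def using wbounds(4) by (simp add: field_simps)
    then have "root k (c * rho^k) \<le> root k t" using k by (intro real_root_le_mono) auto
    moreover have "root k (c * rho^k) = root k c * rho"
      using k pf(1) by (simp add: real_root_mult real_root_power_cancel)
    ultimately show "ereal (root k c * rho) \<le> ereal (root k t)" by simp
  qed
  finally show ?thesis .
qed

lemma Mw_le: "M_w \<mu> x \<le> ereal rho"
proof -
  define c where "c = W x / wmin"
  have cp: "c > 0" unfolding c_def using W_pos wbounds by simp
  have "M_w \<mu> x \<le> liminf (\<lambda>k. ereal (root k c * rho))" unfolding M_w_def
  proof (intro Liminf_mono eventually_sequentiallyI[of 1])
    fix k :: nat assume k: "1 \<le> k"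
    define t where "t = enn2real (\<integral>\<^sup>+y. mp k x y \<partial>count_space UNIV)"
    have "wmin * t \<le> rho^k * W x" unfolding t_def by (rule rs_bounds)
    then have "t \<le> c * rho^k" unfolding c_def using wbounds(1) by (simp add: field_simps)
    then have "root k t \<le> root k (c * rho^k)" using k by (intro real_root_le_mono) auto
    moreover have "root k (c * rho^k) = root k c * rho"
      using k pf(1) by (simp add: real_root_mult real_root_power_cancel)
    ultimately show "ereal (root k t) \<le> ereal (root k c * rho)" by simp
  qed
  also have "\<dots> = ereal rho"
    using lim_imp_Liminf[OF _ root_lim[OF cp]] by simp
  finally show ?thesis .
qed

end

context fbrw begin

lemma folner:
  assumes am: "\<not> nonamenable \<mu>" and ep: "\<epsilon> > 0"
  obtains S where "finite S" "S \<noteq> {}" "enn2real (val S) < \<epsilon> * real (card S)"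
proof -
  define D where "D = (INF S\<in>{S. finite S \<and> S \<noteq> {}}.
            (\<Sum>x\<in>S. \<integral>\<^sup>+ y. indicator (- S) y * first_moment \<mu> x y \<partial>count_space UNIV)
              / of_nat (card S))"
  have "D = 0" using am unfolding nonamenable_def D_def by (simp add: not_less)
  then have "D < ennreal \<epsilon>" using ep by simp
  then obtain S where S: "finite S" "S \<noteq> {}" and lt: "val S / of_nat (card S) < ennreal \<epsilon>"
    unfolding D_def INF_less_iff val_def by auto
  have cpos: "of_nat (card S) \<noteq> (0::ennreal)" using S by simp
  have "val S < ennreal \<epsilon> * of_nat (card S)"
    using lt cpos by (subst (asm) divide_less_ennreal) (auto simp: of_nat_less_top)
  also have "\<dots> = ennreal (\<epsilon> * real (card S))" using ep by (simp add: ennreal_mult ennreal_of_nat_eq_real_of_nat)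
  finally have "enn2real (val S) < \<epsilon> * real (card S)"
    using val_fin[of S] ep S by (simp add: enn2real_less_iff)
  then show ?thesis using that S by blast
qed

lemma lower_quad:
  assumes am: "\<not> nonamenable \<mu>" and r: "r < rho"
  obtains S where "finite S" "S \<noteq> {}"
    "(\<Sum>x\<in>S. \<Sum>y\<in>S. m x y * W x * W y) \<ge> r * (\<Sum>x\<in>S. (W x)\<^sup>2)"
proof -
  define \<epsilon> where "\<epsilon> = (rho - r) * wmin\<^sup>2 / wmax\<^sup>2"
  have ep: "\<epsilon> > 0" unfolding \<epsilon>_def using r wbounds by simp
  obtain S where S: "finite S" "S \<noteq> {}" and vS: "enn2real (val S) < \<epsilon> * real (card S)"
    using folner[OF am ep] by blast
  have e1: "(\<Sum>x\<in>S. \<Sum>y\<in>S. m x y * W x * W y)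
      = (\<Sum>x\<in>S. W x * (rho * W x - enn2real (Rb S x)))"
  proof (intro sum.cong refl)
    fix x
    have "(\<Sum>y\<in>S. m x y * W x * W y) = W x * (\<Sum>y\<in>S. m x y * W y)"
      by (simp add: sum_distrib_left mult_ac)
    also have "\<dots> = W x * (rho * W x - enn2real (Rb S x))" using split_real[OF S(1), of x] by simp
    finally show "(\<Sum>y\<in>S. m x y * W x * W y) = W x * (rho * W x - enn2real (Rb S x))" .
  qed
  have e2: "(\<Sum>x\<in>S. W x * (rho * W x - enn2real (Rb S x)))
      = rho * (\<Sum>x\<in>S. (W x)\<^sup>2) - (\<Sum>x\<in>S. W x * enn2real (Rb S x))"
    by (simp add: algebra_simps sum_subtractf sum_distrib_left power2_eq_square)
  have b1: "(\<Sum>x\<in>S. W x * enn2real (Rb S x)) \<le> (\<Sum>x\<in>S. wmax * (wmax * enn2real (Ob S x)))"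
    using Rb_upper_real[OF S(1)] wbounds W_pos
    by (intro sum_mono mult_mono) (auto simp: less_imp_le)
  also have "\<dots> = wmax\<^sup>2 * enn2real (val S)"
    unfolding Ob_real by (simp add: sum_distrib_left power2_eq_square mult.assoc)
  also have "\<dots> \<le> wmax\<^sup>2 * (\<epsilon> * real (card S))" using vS wbounds by (intro mult_left_mono) auto
  also have "\<dots> = (rho - r) * (real (card S) * wmin\<^sup>2)"
    unfolding \<epsilon>_def using wbounds by (simp add: field_simps)
  also have "\<dots> \<le> (rho - r) * (\<Sum>x\<in>S. (W x)\<^sup>2)"
  proof -
    have "real (card S) * wmin\<^sup>2 = (\<Sum>x\<in>S. wmin\<^sup>2)" by simp
    also have "\<dots> \<le> (\<Sum>x\<in>S. (W x)\<^sup>2)" using wbounds by (intro sum_mono power_mono) (auto simp: less_imp_le)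
    finally show ?thesis using r by (intro mult_left_mono) auto
  qed
  finally have "(\<Sum>x\<in>S. W x * enn2real (Rb S x)) \<le> (rho - r) * (\<Sum>x\<in>S. (W x)\<^sup>2)" .
  then have "r * (\<Sum>x\<in>S. (W x)\<^sup>2) \<le> (\<Sum>x\<in>S. \<Sum>y\<in>S. m x y * W x * W y)"
    unfolding e1 e2 by (simp add: algebra_simps)
  then show ?thesis using that S by blast
qed

end

context fbrw begin

lemma rel_tr:
  assumes fS: "finite S" and "x \<in> S"
  shows "(((\<lambda>v x. \<Sum>y\<in>S. m x y * v y) ^^ k) W) x = (\<Sum>z\<in>S. tr m S k x z * W z)"
  using assms(2)
proof (induction k arbitrary: x)
  case 0
  have "(\<Sum>z\<in>S. tr m S 0 x z * W z) = (\<Sum>z\<in>S. if z = x then W z else 0)"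
    by (intro sum.cong) auto
  also have "\<dots> = W x" using 0 fS by (simp add: sum.delta)
  finally show ?case by simp
next
  case (Suc k)
  have "(((\<lambda>v x. \<Sum>y\<in>S. m x y * v y) ^^ Suc k) W) x
      = (\<Sum>y\<in>S. m x y * (((\<lambda>v x. \<Sum>y\<in>S. m x y * v y) ^^ k) W) y)" by simp
  also have "\<dots> = (\<Sum>y\<in>S. m x y * (\<Sum>z\<in>S. tr m S k y z * W z))"
    using Suc.IH by (intro sum.cong refl) simp
  also have "\<dots> = (\<Sum>z\<in>S. (\<Sum>y\<in>S. m x y * tr m S k y z) * W z)"
  proof -
    have "(\<Sum>y\<in>S. m x y * (\<Sum>z\<in>S. tr m S k y z * W z)) = (\<Sum>y\<in>S. \<Sum>z\<in>S. m x y * tr m S k y z * W z)"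
      by (simp add: sum_distrib_left mult.assoc)
    also have "\<dots> = (\<Sum>z\<in>S. \<Sum>y\<in>S. m x y * tr m S k y z * W z)" by (rule sum.swap)
    also have "\<dots> = (\<Sum>z\<in>S. (\<Sum>y\<in>S. m x y * tr m S k y z) * W z)"
      by (simp add: sum_distrib_right)
    finally show ?thesis .
  qed
  finally show ?case by simp
qed

lemma T_lower:
  assumes am: "\<not> nonamenable \<mu>" and r0: "0 < r" and r: "r < rho"
  obtains S c0 where "finite S" "S \<noteq> {}" "c0 > 0"
    "\<And>k. \<exists>a\<in>S. \<exists>b\<in>S. c0 * r^k \<le> tr m S k a b"
proof -
  obtain S where S: "finite S" "S \<noteq> {}" and Q: "r * (\<Sum>x\<in>S. (W x)\<^sup>2) \<le> (\<Sum>x\<in>S. \<Sum>y\<in>S. m x y * W x * W y)"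
    using lower_quad[OF am r] by blast
  define c0 where "c0 = wmin / (real (card S) * wmax)"
  have cS: "real (card S) > 0" using S by (simp add: card_gt_0_iff)
  have c0p: "c0 > 0" unfolding c0_def using cS wbounds by simp
  have PL: "r^(2*k) * (\<Sum>x\<in>S. (W x)\<^sup>2) \<le> (\<Sum>x\<in>S. ((((\<lambda>v x. \<Sum>y\<in>S. m x y * v y) ^^ k) W) x)\<^sup>2)" for k
    by (rule power_lower[OF S(1) m_sym less_imp_le[OF r0] Q])
  show ?thesis
  proof (rule that[OF S c0p])
    fix k
    define T where "T = Max ((\<lambda>p. tr m S k (fst p) (snd p)) ` (S \<times> S))"
    have fin: "finite ((\<lambda>p. tr m S k (fst p) (snd p)) ` (S \<times> S))" using S by simp
    have ne: "(\<lambda>p. tr m S k (fst p) (snd p)) ` (S \<times> S) \<noteq> {}" using S by simp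
    have trT: "tr m S k a b \<le> T" if "a \<in> S" "b \<in> S" for a b
      unfolding T_def using fin that by (intro Max_ge) (auto intro!: image_eqI[where x="(a,b)"])
    obtain a b where ab: "a \<in> S" "b \<in> S" "tr m S k a b = T"
      using Max_in[OF fin ne] unfolding T_def[symmetric] by auto
    have Tn: "T \<ge> 0" using ab tr_nn[of m, OF m_nn] by metis
    have V: "0 \<le> (((\<lambda>v x. \<Sum>y\<in>S. m x y * v y) ^^ k) W) x \<and>
             (((\<lambda>v x. \<Sum>y\<in>S. m x y * v y) ^^ k) W) x \<le> real (card S) * (T * wmax)" if "x \<in> S" for x
    proof -
      have "(\<Sum>z\<in>S. tr m S k x z * W z) \<le> (\<Sum>z\<in>S. T * wmax)"
        using trT[OF that] wbounds tr_nn[of m, OF m_nn] W_pos Tn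
        by (intro sum_mono mult_mono) (auto simp: less_imp_le)
      moreover have "0 \<le> (\<Sum>z\<in>S. tr m S k x z * W z)"
        using tr_nn[of m, OF m_nn] W_pos by (intro sum_nonneg) (simp add: less_imp_le)
      ultimately show ?thesis unfolding rel_tr[OF S(1) that] by simp
    qed
    have "r^(2*k) * (real (card S) * wmin\<^sup>2) \<le> r^(2*k) * (\<Sum>x\<in>S. (W x)\<^sup>2)"
    proof -
      have "real (card S) * wmin\<^sup>2 = (\<Sum>x\<in>S. wmin\<^sup>2)" by simp
      also have "\<dots> \<le> (\<Sum>x\<in>S. (W x)\<^sup>2)" using wbounds by (intro sum_mono power_mono) (auto simp: less_imp_le)
      finally show ?thesis using r0 by (intro mult_left_mono) auto
    qed
    also have "\<dots> \<le> (\<Sum>x\<in>S. ((((\<lambda>v x. \<Sum>y\<in>S. m x y * v y) ^^ k) W) x)\<^sup>2)" by (rule PL)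
    also have "\<dots> \<le> (\<Sum>x\<in>S. (real (card S) * (T * wmax))\<^sup>2)"
      using V by (intro sum_mono power_mono) auto
    also have "\<dots> = real (card S) * (real (card S) * (T * wmax))\<^sup>2" by simp
    finally have h: "r^(2*k) * (real (card S) * wmin\<^sup>2) \<le> real (card S) * (real (card S) * (T * wmax))\<^sup>2" .
    have eq: "r^(2*k) * (real (card S) * wmin\<^sup>2) = real (card S) * (r^k * wmin)\<^sup>2"
      unfolding power_even_eq power_mult_distrib by (simp only: mult_ac)
    from h have "real (card S) * (r^k * wmin)\<^sup>2 \<le> real (card S) * (real (card S) * (T * wmax))\<^sup>2"
      unfolding eq .
    then have "(r^k * wmin)\<^sup>2 \<le> (real (card S) * (T * wmax))\<^sup>2"
      using cS by (rule mult_left_le_imp_le)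
    then have le2: "r^k * wmin \<le> real (card S) * (T * wmax)"
      by (rule power2_le_imp_le) (use Tn wbounds in simp)
    have dp: "real (card S) * wmax > 0" using cS wbounds by simp
    have "c0 * r^k = (r^k * wmin) / (real (card S) * wmax)" unfolding c0_def by simp
    also have "\<dots> \<le> T" using le2 dp by (simp add: pos_divide_le_eq mult_ac)
    finally have "c0 * r^k \<le> T" .
    then show "\<exists>a\<in>S. \<exists>b\<in>S. c0 * r^k \<le> tr m S k a b" using ab by blast
  qed
qed

end

context fbrw begin

lemma Ms_ge_r:
  assumes am: "\<not> nonamenable \<mu>" and r0: "0 < r" and r: "r < rho"
  shows "ereal r \<le> M_s \<mu> x y"
proof -
  obtain S c0 where S: "finite S" "S \<noteq> {}" and c0: "c0 > 0"
    and Tl: "\<And>k. \<exists>a\<in>S. \<exists>b\<in>S. c0 * r^k \<le> tr m S k a b"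
    using T_lower[OF am r0 r] by blast
  define pa where "pa a = (SOME p. mp p x a > 0)" for a
  define qb where "qb b = (SOME q. mp q b y > 0)" for b
  have pa: "mp (pa a) x a > 0" for a unfolding pa_def by (rule someI_ex[OF mp_pos])
  have qb: "mp (qb b) b y > 0" for b unfolding qb_def by (rule someI_ex[OF mp_pos])
  have e2r: "enn2real (mp k a b) > 0" if "mp k a b > 0" for k a b
    using that mp_fin[of k a b] by (simp add: enn2real_positive_iff)
  define E where "E p = enn2real (mp (pa (fst p)) x (fst p)) * enn2real (mp (qb (snd p)) (snd p) y)" for p
  define \<delta> where "\<delta> = Min (E ` (S \<times> S))"
  have finE: "finite (E ` (S \<times> S))" "E ` (S \<times> S) \<noteq> {}" using S by auto
  have dp: "\<delta> > 0" unfolding \<delta>_def using finE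
    by (subst Min_gr_iff) (auto simp: E_def intro!: mult_pos_pos e2r pa qb)
  have dle: "\<delta> \<le> E (a, b)" if "a \<in> S" "b \<in> S" for a b
    unfolding \<delta>_def using finE that by (intro Min_le) auto
  define L where "L = Max ((\<lambda>p. pa (fst p) + qb (snd p)) ` (S \<times> S))"
  have Lle: "pa a + qb b \<le> L" if "a \<in> S" "b \<in> S" for a b
    unfolding L_def using S that by (intro Max_ge) (auto intro!: image_eqI[where x="(a,b)"])
  define \<Lambda> where "\<Lambda> = max 1 (r^L)"
  have Lp: "\<Lambda> > 0" unfolding \<Lambda>_def by simp
  define \<gamma> where "\<gamma> = \<delta> * c0 / \<Lambda>"
  have gp: "\<gamma> > 0" unfolding \<gamma>_def using dp c0 Lp by simp
  have claim: "\<exists>N\<ge>k. \<gamma> * r^N \<le> enn2real (mp N x y)" for k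
  proof -
    obtain a b where ab: "a \<in> S" "b \<in> S" and tl: "c0 * r^k \<le> tr m S k a b" using Tl[of k] by blast
    define d where "d = pa a + qb b"
    define N where "N = pa a + (k + qb b)"
    have "mp k a b * mp (qb b) b y \<le> mp (k + qb b) a y" by (rule mp_ge)
    then have "mp (pa a) x a * (mp k a b * mp (qb b) b y) \<le> mp (pa a) x a * mp (k + qb b) a y"
      by (rule mult_left_mono) simp
    also have "\<dots> \<le> mp N x y" unfolding N_def by (rule mp_ge)
    finally have "enn2real (mp (pa a) x a * (mp k a b * mp (qb b) b y)) \<le> enn2real (mp N x y)"
      using mp_fin by (intro enn2real_mono) auto
    then have A: "E (a, b) * enn2real (mp k a b) \<le> enn2real (mp N x y)"
      unfolding E_def by (simp add: enn2real_mult mult_ac)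
    have "ennreal (tr m S k a b) \<le> mp k a b" by (rule tr_le_mp[OF S(1)])
    then have "enn2real (ennreal (tr m S k a b)) \<le> enn2real (mp k a b)"
      using mp_fin by (intro enn2real_mono) auto
    then have trl: "tr m S k a b \<le> enn2real (mp k a b)" using tr_nn[of m, OF m_nn] by simp
    have En: "E (a, b) \<ge> 0" unfolding E_def by simp
    have "\<delta> * (c0 * r^k) \<le> E (a, b) * enn2real (mp k a b)"
      using dle[OF ab] tl trl dp c0 r0 by (intro mult_mono) auto
    also have "\<dots> \<le> enn2real (mp N x y)" by (rule A)
    finally have B: "\<delta> * (c0 * r^k) \<le> enn2real (mp N x y)" .
    have rd: "r^d \<le> \<Lambda>"
    proof (cases "r \<le> 1")
      case True then have "r^d \<le> 1" using r0 by (intro power_le_one) auto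
      then show ?thesis unfolding \<Lambda>_def by simp
    next
      case False then have "r^d \<le> r^L" using Lle[OF ab] unfolding d_def by (intro power_increasing) auto
      then show ?thesis unfolding \<Lambda>_def by simp
    qed
    have rN: "r^N = r^k * r^d" unfolding N_def d_def by (simp add: power_add mult_ac)
    have "\<gamma> * r^N = \<delta> * c0 * (r^k * (r^d / \<Lambda>))" unfolding \<gamma>_def rN by (simp add: field_simps)
    also have "\<dots> \<le> \<delta> * c0 * (r^k * 1)"
      using rd Lp dp c0 r0 by (intro mult_left_mono) (auto simp: divide_le_eq_1)
    also have "\<dots> \<le> enn2real (mp N x y)" using B by (simp add: mult_ac)
    finally have "\<gamma> * r^N \<le> enn2real (mp N x y)" .
    moreover have "N \<ge> k" unfolding N_def by simp
    ultimately show ?thesis by blast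
  qed
  show ?thesis
  proof (rule ccontr)
    assume "\<not> ereal r \<le> M_s \<mu> x y"
    then have lt: "M_s \<mu> x y < ereal r" by simp
    then obtain z where z1: "M_s \<mu> x y < z" and z2: "z < ereal r" using dense by blast
    obtain y' where zy: "z = ereal y'" using z1 z2 by (cases z) auto
    have yr: "y' < r" using z2 zy by simp
    have ev1: "eventually (\<lambda>N. ereal (root N (enn2real (mp N x y))) < ereal y') sequentially"
    proof -
      have "limsup (\<lambda>N. ereal (root N (enn2real (mp N x y)))) < ereal y'"
        using z1 zy unfolding M_s_def by simp
      then show ?thesis by (rule Limsup_lessD)
    qed
    have lim: "(\<lambda>N. root N \<gamma> * r) \<longlonglongrightarrow> 1 * r" by (intro tendsto_mult LIMSEQ_root_const gp tendsto_const)
    have ev2: "eventually (\<lambda>N. y' < root N \<gamma> * r) sequentially"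
      using order_tendstoD(1)[OF lim] yr by simp
    have "eventually (\<lambda>N. ereal (root N (enn2real (mp N x y))) < ereal y' \<and> y' < root N \<gamma> * r \<and> N \<ge> 1) sequentially"
      using ev1 ev2 eventually_ge_at_top[of 1] by eventually_elim auto
    then obtain K where K: "\<And>N. N \<ge> K \<Longrightarrow> ereal (root N (enn2real (mp N x y))) < ereal y' \<and> y' < root N \<gamma> * r \<and> N \<ge> 1"
      unfolding eventually_sequentially by blast
    obtain N where N: "N \<ge> K" and lb: "\<gamma> * r^N \<le> enn2real (mp N x y)" using claim[of K] by blast
    have N1: "N \<ge> 1" and h1: "root N (enn2real (mp N x y)) < y'" and h2: "y' < root N \<gamma> * r" using K[OF N] by auto
    have "root N (\<gamma> * r^N) \<le> root N (enn2real (mp N x y))" using N1 lb by (intro real_root_le_mono) auto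
    moreover have "root N (\<gamma> * r^N) = root N \<gamma> * r"
      using N1 r0 by (simp add: real_root_mult real_root_power_cancel)
    ultimately show False using h1 h2 by simp
  qed
qed

lemma Ms_ge_rho:
  assumes am: "\<not> nonamenable \<mu>"
  shows "ereal rho \<le> M_s \<mu> x y"
proof (cases "rho = 0")
  case True
  have "ereal 0 \<le> M_s \<mu> x y" unfolding M_s_def
    by (intro le_Limsup always_eventually allI) (auto intro: real_root_ge_zero)
  then show ?thesis using True by simp
next
  case False
  then have rp: "rho > 0" using pf(1) by simp
  show ?thesis
  proof (rule dense_le_bounded[of "ereal 0"])
    show "ereal 0 < ereal rho" using rp by simp
    fix w assume w1: "ereal 0 < w" and w2: "w < ereal rho"
    obtain r where wr: "w = ereal r" using w1 w2 by (cases w) auto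
    show "w \<le> M_s \<mu> x y" unfolding wr using Ms_ge_r[OF am] w1 w2 wr by simp
  qed
qed

lemma main_equiv: "nonamenable \<mu> \<longleftrightarrow> M_s \<mu> x y < M_w \<mu> x"
proof
  assume na: "nonamenable \<mu>"
  obtain \<theta> where th: "0 \<le> \<theta>" "\<theta> < rho"
    and Qb: "\<And>F u. finite F \<Longrightarrow> (\<And>x. x \<in> F \<Longrightarrow> u x \<ge> 0) \<Longrightarrow>
        (\<Sum>x\<in>F. \<Sum>y\<in>F. m x y * u x * u y) \<le> \<theta> * (\<Sum>x\<in>F. (u x)\<^sup>2)"
    using quad_bound[OF na] by blast
  have "M_s \<mu> x y \<le> ereal \<theta>" by (rule Ms_le[OF th(1) Qb])
  also have "\<dots> < ereal rho" using th by simp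
  also have "\<dots> \<le> M_w \<mu> x" by (rule Mw_ge)
  finally show "M_s \<mu> x y < M_w \<mu> x" .
next
  assume lt: "M_s \<mu> x y < M_w \<mu> x"
  show "nonamenable \<mu>"
  proof (rule ccontr)
    assume am: "\<not> nonamenable \<mu>"
    have "M_w \<mu> x \<le> ereal rho" by (rule Mw_le)
    also have "\<dots> \<le> M_s \<mu> x y" by (rule Ms_ge_rho[OF am])
    finally show False using lt by simp
  qed
qed

end

theorem mainTheorem5:
  fixes \<mu> :: "'x::countable \<Rightarrow> ('x \<Rightarrow> nat) pmf"
    and g :: "'x \<Rightarrow> 'y::finite"
    and \<nu> :: "'y \<Rightarrow> ('y \<Rightarrow> nat) pmf"
    and x y :: 'x
  assumes "is_brw \<mu>"
    and "is_brw \<nu>"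
    and "locally_isomorphic \<mu> g \<nu>"
    and "irreducible_brw \<mu>"
    and "non_oriented \<mu>"
  shows "nonamenable \<mu> \<longleftrightarrow> M_s \<mu> x y < M_w \<mu> x"
proof -
  interpret fbrw \<mu> g \<nu> using assms by unfold_locales
  show ?thesis by (rule main_equiv)
qed

end
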